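(* Let $G$ be a finite group and $H\trianglelefteq G$ a normal subgroup with a surjection $H\to\Gamma$, where $\Gamma$, $\Phi$, $\Psi$, $X$ are as in the context, and regard $X$ as a representation of $H$ via this surjection. Let $N\subseteq G$ be as in the context, so $H\subseteq N\subseteq G$. (1) If $U\subseteq\mathrm{Ind}_H^NX$ is an irreducible representation of $N$, then $\mathrm{Ind}_N^GU$ is an irreducible representation of $G$. (2) If $V'\subseteq\mathrm{Ind}_H^GX$ is an irreducible representation of $G$, then there is an irreducible $N$-subrepresentation $U\subseteq\mathrm{Ind}_H^NX$ with $V'\cong\mathrm{Ind}_N^GU$.
   Context: All representations are over an algebraically closed field $E$ of characteristic zero. $V$ is a two-dimensional $E$-vector space and $\Gamma\subset\mathrm{PGL}(V)$ is a finite subgroup acting irreducibly on $\mathbf P(V)$ (so $\Gamma\cong A_4,S_4,A_5$ or $D_n$ of order $2n$, $n\ge3$ odd), with projective representation $\Phi$. $W$ is the space of trace-zero endomorphisms of $V$ with $\Gamma$ acting by conjugation; $X\subseteq W$ is the unique $\Gamma$-stable subspace on which $\Gamma$ acts irreducibly and faithfully ($X=W$ unless $\Gamma\cong D_n$, in which case $W=X\oplus\epsilon$, $\epsilon$ the quadratic character, $\dim X=2$); $\Psi$ is the linear representation of $\Gamma$ on $X$. Let $\mathrm{Ker}$ be the kernel of $H\to\Gamma$, $N(\mathrm{Ker})$ its normalizer in $G$, and $N(\mathrm{Ker})\to\mathrm{Aut}(\Gamma)$ the map induced by conjugation. $N$ is the preimage of $\mathrm{Aut}_\Psi(\Gamma)=\{\alpha\in\mathrm{Aut}(\Gamma):\Psi\circ\alpha\cong\Psi\}$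 (equivalently of $\mathrm{Aut}_\Phi(\Gamma)$) under this map. *)

theory Defs
  imports "HOL-Analysis.Analysis" "HOL-Algebra.Algebra" "HOL-Algebra.Group_Action"
    "HOL-Library.Function_Algebras" "HOL-Computational_Algebra.Polynomial"
begin

definition alg_closed :: "'e::field itself \<Rightarrow> bool" where
  "alg_closed _ \<longleftrightarrow> (\<forall>p :: 'e Polynomial.poly. Polynomial.degree p \<ge> 1 \<longrightarrow> (\<exists>x. Polynomial.poly p x = 0))"

definition mscale :: "'e::field \<Rightarrow> 'e^2^2 \<Rightarrow> 'e^2^2" where
  "mscale c M = (\<chi> i j. c * M $ i $ j)"

text \<open>The element of PGL(V) determined by an invertible matrix: its class modulo nonzero scalars.\<close>
definition pcls :: "'e::field^2^2 \<Rightarrow> ('e^2^2) set" where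
  "pcls A = {mscale c A | c. c \<noteq> 0}"

definition prep :: "('e::field^2^2) set \<Rightarrow> 'e^2^2" where
  "prep a = (SOME A. A \<in> a)"

definition PGL2 :: "('e::field^2^2) set monoid" where
  "PGL2 = \<lparr> carrier = pcls ` {A. invertible A},
            mult = (\<lambda>a b. pcls (prep a ** prep b)),
            one = pcls (mat 1) \<rparr>"

text \<open>Gamma acts irreducibly on P(V): no line of V is fixed by all of Gamma.\<close>
definition proj_irreducible :: "('e::field^2^2) set set \<Rightarrow> bool" where
  "proj_irreducible Gm \<longleftrightarrow>
     \<not> (\<exists>v::'e^2. v \<noteq> 0 \<and> (\<forall>a\<in>Gm. \<exists>c. prep a *v v = c *s v))"

definition Wsp :: "('e::field^2^2) set" where
  "Wsp = {M. trace M = 0}"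

definition psi :: "('e::field^2^2) set \<Rightarrow> 'e^2^2 \<Rightarrow> 'e^2^2" where
  "psi a M = prep a ** M ** matrix_inv (prep a)"

definition is_subspace :: "('e::field \<Rightarrow> 'v::ab_group_add \<Rightarrow> 'v) \<Rightarrow> 'v set \<Rightarrow> bool" where
  "is_subspace sc S \<longleftrightarrow> 0 \<in> S \<and> (\<forall>x\<in>S. \<forall>y\<in>S. x + y \<in> S) \<and> (\<forall>c. \<forall>x\<in>S. sc c x \<in> S)"

definition is_rep ::
  "('e::field \<Rightarrow> 'v::ab_group_add \<Rightarrow> 'v) \<Rightarrow> ('g, 'm) monoid_scheme \<Rightarrow> ('g \<Rightarrow> 'v \<Rightarrow> 'v) \<Rightarrow> 'v set \<Rightarrow> bool" where
  "is_rep sc K \<rho> S \<longleftrightarrow> is_subspace sc S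
     \<and> (\<forall>k\<in>carrier K. \<forall>v\<in>S. \<rho> k v \<in> S)
     \<and> (\<forall>k\<in>carrier K. \<forall>x\<in>S. \<forall>y\<in>S. \<rho> k (x + y) = \<rho> k x + \<rho> k y)
     \<and> (\<forall>k\<in>carrier K. \<forall>c. \<forall>x\<in>S. \<rho> k (sc c x) = sc c (\<rho> k x))
     \<and> (\<forall>v\<in>S. \<rho> \<one>\<^bsub>K\<^esub> v = v)
     \<and> (\<forall>k\<in>carrier K. \<forall>l\<in>carrier K. \<forall>v\<in>S. \<rho> (k \<otimes>\<^bsub>K\<^esub> l) v = \<rho> k (\<rho> l v))"

definition invariant_subspace ::
  "('e::field \<Rightarrow> 'v::ab_group_add \<Rightarrow> 'v) \<Rightarrow> ('g, 'm) monoid_scheme \<Rightarrow> ('g \<Rightarrow> 'v \<Rightarrow> 'v) \<Rightarrow> 'v set \<Rightarrow> 'v set \<Rightarrow> bool" where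
  "invariant_subspace sc K \<rho> S T \<longleftrightarrow> T \<subseteq> S \<and> is_subspace sc T \<and> (\<forall>k\<in>carrier K. \<forall>v\<in>T. \<rho> k v \<in> T)"

definition irred_rep ::
  "('e::field \<Rightarrow> 'v::ab_group_add \<Rightarrow> 'v) \<Rightarrow> ('g, 'm) monoid_scheme \<Rightarrow> ('g \<Rightarrow> 'v \<Rightarrow> 'v) \<Rightarrow> 'v set \<Rightarrow> bool" where
  "irred_rep sc K \<rho> S \<longleftrightarrow> is_rep sc K \<rho> S \<and> S \<noteq> {0}
     \<and> (\<forall>T. invariant_subspace sc K \<rho> S T \<longrightarrow> T = {0} \<or> T = S)"

definition rep_iso ::
  "('e::field \<Rightarrow> 'v::ab_group_add \<Rightarrow> 'v) \<Rightarrow> ('e \<Rightarrow> 'w::ab_group_add \<Rightarrow> 'w) \<Rightarrow> ('g, 'm) monoid_scheme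
   \<Rightarrow> ('g \<Rightarrow> 'v \<Rightarrow> 'v) \<Rightarrow> 'v set \<Rightarrow> ('g \<Rightarrow> 'w \<Rightarrow> 'w) \<Rightarrow> 'w set \<Rightarrow> bool" where
  "rep_iso sc1 sc2 K \<rho>1 S1 \<rho>2 S2 \<longleftrightarrow> (\<exists>T. bij_betw T S1 S2
     \<and> (\<forall>x\<in>S1. \<forall>y\<in>S1. T (x + y) = T x + T y)
     \<and> (\<forall>c. \<forall>x\<in>S1. T (sc1 c x) = sc2 c (T x))
     \<and> (\<forall>k\<in>carrier K. \<forall>x\<in>S1. T (\<rho>1 k x) = \<rho>2 k (T x)))"

definition fscale :: "('e \<Rightarrow> 'v \<Rightarrow> 'v) \<Rightarrow> 'e \<Rightarrow> ('g \<Rightarrow> 'v) \<Rightarrow> ('g \<Rightarrow> 'v)" where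
  "fscale sc c f = (\<lambda>x. sc c (f x))"

text \<open>For subgroups K \<subseteq> L of G and a representation (S, rho) of K,
  Ind_K^L S = {f : L \<rightarrow> S | f(k x) = rho(k) f(x) for k in K}
  (functions extended by 0 outside L), with L acting by right translation.\<close>
definition ind_space ::
  "('g, 'm) monoid_scheme \<Rightarrow> 'g set \<Rightarrow> 'g set \<Rightarrow> ('g \<Rightarrow> 'v::zero \<Rightarrow> 'v) \<Rightarrow> 'v set \<Rightarrow> ('g \<Rightarrow> 'v) set" where
  "ind_space G K L \<rho> S = {f. (\<forall>x. x \<notin> L \<longrightarrow> f x = 0) \<and> (\<forall>x\<in>L. f x \<in> S)
       \<and> (\<forall>k\<in>K. \<forall>x\<in>L. f (k \<otimes>\<^bsub>G\<^esub> x) = \<rho> k (f x))}"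

definition ind_act :: "('g, 'm) monoid_scheme \<Rightarrow> 'g set \<Rightarrow> 'g \<Rightarrow> ('g \<Rightarrow> 'v::zero) \<Rightarrow> ('g \<Rightarrow> 'v)" where
  "ind_act G L l f = (\<lambda>x. if x \<in> L then f (x \<otimes>\<^bsub>G\<^esub> l) else 0)"

definition dih_rot :: "nat \<Rightarrow> nat \<Rightarrow> nat" where
  "dih_rot n i = (if i \<in> {1..n} then (i mod n) + 1 else i)"

definition dih_refl :: "nat \<Rightarrow> nat \<Rightarrow> nat" where
  "dih_refl n i = (if i \<in> {1..n} then n + 1 - i else i)"

text \<open>D_n (order 2n) as the symmetry group of the n-gon inside S_n.\<close>
definition dihedral_group :: "nat \<Rightarrow> (nat \<Rightarrow> nat) monoid" where
  "dihedral_group n = (sym_group n)\<lparr> carrier := generate (sym_group n) {dih_rot n, dih_refl n} \<rparr>"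

definition Aut_Psi :: "('e::field^2^2) set set \<Rightarrow> ('e^2^2) set \<Rightarrow> (('e^2^2) set \<Rightarrow> ('e^2^2) set) set" where
  "Aut_Psi Gm Xs = {\<sigma> \<in> iso (PGL2\<lparr>carrier := Gm\<rparr>) (PGL2\<lparr>carrier := Gm\<rparr>).
       rep_iso mscale mscale (PGL2\<lparr>carrier := Gm\<rparr>) (\<lambda>a. psi (\<sigma> a)) Xs psi Xs}"

text \<open>The automorphism of Gamma induced by conjugation by g \<in> N(Ker):
  pi(h) \<mapsto> pi(g h g^-1).\<close>
definition conj_aut :: "('g, 'm) monoid_scheme \<Rightarrow> 'g set \<Rightarrow> ('g \<Rightarrow> 'a) \<Rightarrow> 'g \<Rightarrow> 'a \<Rightarrow> 'a" where
  "conj_aut G H \<pi> g a = \<pi> (g \<otimes>\<^bsub>G\<^esub> (SOME h. h \<in> H \<and> \<pi> h = a) \<otimes>\<^bsub>G\<^esub> inv\<^bsub>G\<^esub> g)"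

definition Nsub :: "('g, 'm) monoid_scheme \<Rightarrow> 'g set \<Rightarrow> ('g \<Rightarrow> ('e::field^2^2) set)
     \<Rightarrow> ('e^2^2) set set \<Rightarrow> ('e^2^2) set \<Rightarrow> 'g set" where
  "Nsub G H \<pi> Gm Xs =
     {g \<in> normalizer G (kernel (G\<lparr>carrier := H\<rparr>) (PGL2\<lparr>carrier := Gm\<rparr>) \<pi>).
        conj_aut G H \<pi> g \<in> Aut_Psi Gm Xs}"

end

theory Submission
  imports Defs
begin


lemma mscale_1[simp]: "mscale 1 A = A"
  by (simp add: mscale_def vec_eq_iff)
lemma mscale_mscale[simp]: "mscale a (mscale b A) = mscale (a*b) A"
  by (simp add: mscale_def vec_eq_iff mult.assoc)
lemma mscale_mult_left: "mscale c A ** B = mscale c (A ** B)"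
  by (simp add: mscale_def matrix_matrix_mult_def vec_eq_iff sum_distrib_left mult.assoc)
lemma mscale_mult_right: "A ** mscale c B = mscale c (A ** B)"
  by (simp add: mscale_def matrix_matrix_mult_def vec_eq_iff sum_distrib_left mult_ac)
lemma mscale_add: "mscale c (A + B) = mscale c A + mscale c B"
  by (simp add: mscale_def vec_eq_iff distrib_left)
lemma mscale_zero[simp]: "mscale c 0 = 0"
  by (simp add: mscale_def vec_eq_iff)
lemma mscale_entry[simp]: "mscale c A $ i $ j = c * A $ i $ j"
  by (simp add: mscale_def)

lemma pcls_mscale: assumes cnz: "(c::'e::field) \<noteq> 0" shows "pcls (mscale c A) = pcls A"
proof
  show "pcls (mscale c A) \<subseteq> pcls A"
  proof
    fix x assume "x \<in> pcls (mscale c A)"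
    then obtain d where d: "d \<noteq> 0" "x = mscale d (mscale c A)" by (auto simp: pcls_def)
    have "x = mscale (d * c) A" "d * c \<noteq> 0" using cnz d by simp_all
    thus "x \<in> pcls A" unfolding pcls_def by blast
  qed
  show "pcls A \<subseteq> pcls (mscale c A)"
  proof
    fix x assume "x \<in> pcls A"
    then obtain d where d: "d \<noteq> 0" "x = mscale d A" by (auto simp: pcls_def)
    have "x = mscale (d / c) (mscale c A)" "d / c \<noteq> 0" using cnz d by simp_all
    thus "x \<in> pcls (mscale c A)" unfolding pcls_def by blast
  qed
qed

lemma self_pcls: "A \<in> pcls (A::'e::field^2^2)"
  unfolding pcls_def by (rule CollectI, rule exI[of _ 1], simp)

lemma invertible_mscale:
  assumes "(c::'e::field) \<noteq> 0" "invertible (A::'e^2^2)" shows "invertible (mscale c A)"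
proof -
  obtain B where B: "A ** B = mat 1" "B ** A = mat 1" using assms(2) unfolding invertible_def by blast
  have "mscale c A ** mscale (1/c) B = mat 1" "mscale (1/c) B ** mscale c A = mat 1"
    using assms(1) B by (simp_all add: mscale_mult_left mscale_mult_right mult.commute)
  thus ?thesis unfolding invertible_def by blast
qed

lemma PGL2_carrier_D:
  assumes "a \<in> carrier (PGL2::('e::field^2^2) set monoid)"
  shows "prep a \<in> a" "invertible (prep a)" "pcls (prep a) = a"
proof -
  obtain A where A: "invertible A" "a = pcls A" using assms by (auto simp: PGL2_def)
  have "A \<in> a" using A self_pcls by blast
  hence pa: "prep a \<in> a" unfolding prep_def by (rule someI)
  then obtain c where c: "c \<noteq> 0" "prep a = mscale c A" using A by (auto simp: pcls_def)
  show "prep a \<in> a" by fact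
  show "invertible (prep a)" using c A invertible_mscale by metis
  show "pcls (prep a) = a" using c A pcls_mscale by metis
qed

lemma one_PGL2_carrier: "pcls (mat 1) \<in> carrier (PGL2::('e::field^2^2) set monoid)"
proof -
  have "invertible (mat 1::'e^2^2)" unfolding invertible_def by (rule exI[of _ "mat 1"]) simp
  thus ?thesis unfolding PGL2_def by simp
qed

lemma PGL2_r_one:
  assumes "a \<in> carrier (PGL2::('e::field^2^2) set monoid)"
  shows "a \<otimes>\<^bsub>PGL2\<^esub> \<one>\<^bsub>PGL2\<^esub> = a"
proof -
  have "prep (pcls (mat 1)) \<in> pcls (mat 1::'e^2^2)"
    using PGL2_carrier_D(1)[OF one_PGL2_carrier] by simp
  then obtain c where c: "c \<noteq> 0" "prep (pcls (mat 1)) = mscale c (mat 1::'e^2^2)" by (auto simp: pcls_def)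
  have "a \<otimes>\<^bsub>PGL2\<^esub> \<one>\<^bsub>PGL2\<^esub> = pcls (prep a ** prep (pcls (mat 1)))"
    by (simp add: PGL2_def)
  also have "\<dots> = pcls (mscale c (prep a))" using c(2) by (simp add: mscale_mult_right)
  also have "\<dots> = a" using c(1) pcls_mscale PGL2_carrier_D(3)[OF assms] by metis
  finally show ?thesis .
qed

lemma invertible_inv:
  assumes "invertible (P::'e::field^2^2)"
  shows "P ** matrix_inv P = mat 1" "matrix_inv P ** P = mat 1"
proof -
  have "\<exists>A'. P ** A' = mat 1 \<and> A' ** P = mat 1" using assms unfolding invertible_def by blast
  hence "P ** matrix_inv P = mat 1 \<and> matrix_inv P ** P = mat 1"
    unfolding matrix_inv_def by (rule someI_ex)
  thus "P ** matrix_inv P = mat 1" "matrix_inv P ** P = mat 1" by auto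
qed

lemma psi_add: "psi a (M + M') = psi a M + psi a M'"
  unfolding psi_def by (simp add: matrix_matrix_mult_def vec_eq_iff sum.distrib distrib_right distrib_left)
lemma psi_scale: "psi a (mscale c M) = mscale c (psi a M)"
  by (simp add: psi_def mscale_mult_left mscale_mult_right)
lemma psi_zero[simp]: "psi a 0 = 0"
  by (simp add: psi_def)
lemma psi_sum: "psi a (sum f A) = (\<Sum>x\<in>A. psi a (f x))"
  by (induction A rule: infinite_finite_induct) (auto simp: psi_add)
lemma psi_inj:
  assumes "a \<in> carrier (PGL2::('e::field^2^2) set monoid)" "psi a M = psi a M'"
  shows "M = M'"
proof -
  let ?P = "prep a"
  have P: "?P ** matrix_inv ?P = mat 1" "matrix_inv ?P ** ?P = mat 1"
    using invertible_inv PGL2_carrier_D(2)[OF assms(1)] by auto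
  have key: "matrix_inv ?P ** (psi a Y) ** ?P = Y" for Y
  proof -
    have "matrix_inv ?P ** (psi a Y) ** ?P
        = (matrix_inv ?P ** ?P) ** Y ** (matrix_inv ?P ** ?P)"
      unfolding psi_def by (simp only: matrix_mul_assoc)
    also have "\<dots> = Y" unfolding P(2) by (simp only: matrix_mul_lid matrix_mul_rid)
    finally show ?thesis .
  qed
  have "M = matrix_inv ?P ** (psi a M) ** ?P" by (rule key[symmetric])
  also have "\<dots> = matrix_inv ?P ** (psi a M') ** ?P" by (simp only: assms(2))
  also have "\<dots> = M'" by (rule key)
  finally show ?thesis .
qed




locale L47 = group G for G :: "('g, 'm) monoid_scheme" (structure) +
  fixes H :: "'g set" and \<Gamma> :: "('e::field_char_0^2^2) set set" and Xs :: "('e^2^2) set"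
    and \<pi> :: "'g \<Rightarrow> ('e^2^2) set"
  assumes \<Gamma>_sub: "subgroup \<Gamma> PGL2"
    and X_irr: "irred_rep mscale (PGL2\<lparr>carrier := \<Gamma>\<rparr>) psi Xs"
    and X_faithful: "\<forall>a\<in>\<Gamma>. (\<forall>M\<in>Xs. psi a M = M) \<longrightarrow> a = \<one>\<^bsub>PGL2\<^esub>"
    and G_fin: "finite (carrier G)"
    and H_nrm: "H \<lhd> G"
    and \<pi>_hom: "\<pi> \<in> hom (G\<lparr>carrier := H\<rparr>) (PGL2\<lparr>carrier := \<Gamma>\<rparr>)"
    and \<pi>_surj: "\<pi> ` H = \<Gamma>"
begin

definition Xr :: "'g \<Rightarrow> 'e^2^2 \<Rightarrow> 'e^2^2" where "Xr h = psi (\<pi> h)"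
definition Ker where "Ker = kernel (G\<lparr>carrier := H\<rparr>) (PGL2\<lparr>carrier := \<Gamma>\<rparr>) \<pi>"
definition NN where "NN = Nsub G H \<pi> \<Gamma> Xs"

lemma \<Gamma>_PGL: "a \<in> \<Gamma> \<Longrightarrow> a \<in> carrier PGL2"
  using \<Gamma>_sub subgroup.subset by blast

lemma X_rep: "is_rep mscale (PGL2\<lparr>carrier := \<Gamma>\<rparr>) psi Xs"
  using X_irr unfolding irred_rep_def by blast

lemma psi_in: "a \<in> \<Gamma> \<Longrightarrow> v \<in> Xs \<Longrightarrow> psi a v \<in> Xs"
  using X_rep unfolding is_rep_def by simp
lemma psi_comp: "a \<in> \<Gamma> \<Longrightarrow> b \<in> \<Gamma> \<Longrightarrow> v \<in> Xs \<Longrightarrow> psi (a \<otimes>\<^bsub>PGL2\<^esub> b) v = psi a (psi b v)"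
  using X_rep unfolding is_rep_def by simp
lemma psi_one: "v \<in> Xs \<Longrightarrow> psi \<one>\<^bsub>PGL2\<^esub> v = v"
  using X_rep unfolding is_rep_def by simp
lemma Xs_sub: "is_subspace mscale Xs"
  using X_rep unfolding is_rep_def by simp
lemma Xs_0: "0 \<in> Xs" using Xs_sub unfolding is_subspace_def by simp
lemma Xs_add: "x \<in> Xs \<Longrightarrow> y \<in> Xs \<Longrightarrow> x + y \<in> Xs" using Xs_sub unfolding is_subspace_def by simp
lemma Xs_scale: "x \<in> Xs \<Longrightarrow> mscale c x \<in> Xs" using Xs_sub unfolding is_subspace_def by simp
lemma Xs_sum: "(\<And>i. i \<in> I \<Longrightarrow> f i \<in> Xs) \<Longrightarrow> sum f I \<in> Xs"
  by (induction I rule: infinite_finite_induct) (auto simp: Xs_0 Xs_add)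
lemma Xs_neg: "x \<in> Xs \<Longrightarrow> - x \<in> Xs"
proof -
  assume "x \<in> Xs"
  hence "mscale (-1) x \<in> Xs" by (rule Xs_scale)
  moreover have "mscale (-1) x = - x" by (simp add: mscale_def vec_eq_iff)
  ultimately show ?thesis by simp
qed
lemma Xs_diff: "x \<in> Xs \<Longrightarrow> y \<in> Xs \<Longrightarrow> x - y \<in> Xs"
  using Xs_add[of x "-y"] Xs_neg by simp
lemma Xs_ne: "Xs \<noteq> {0}" using X_irr unfolding irred_rep_def by blast

lemma X_irred:
  assumes "S \<subseteq> Xs" "is_subspace mscale S" "\<And>a v. a \<in> \<Gamma> \<Longrightarrow> v \<in> S \<Longrightarrow> psi a v \<in> S"
  shows "S = {0} \<or> S = Xs"
  using X_irr assms unfolding irred_rep_def invariant_subspace_def by auto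

lemma H_sub: "subgroup H G" using H_nrm by (rule normal_imp_subgroup)
lemma H_carr: "h \<in> H \<Longrightarrow> h \<in> carrier G" using subgroup.subset[OF H_sub] by blast
lemma H_mult: "h \<in> H \<Longrightarrow> k \<in> H \<Longrightarrow> h \<otimes> k \<in> H" by (rule subgroup.m_closed[OF H_sub])
lemma H_inv: "h \<in> H \<Longrightarrow> inv h \<in> H" by (rule subgroup.m_inv_closed[OF H_sub])
lemma H_one: "\<one> \<in> H" by (rule subgroup.one_closed[OF H_sub])
lemma H_conj: "g \<in> carrier G \<Longrightarrow> h \<in> H \<Longrightarrow> g \<otimes> h \<otimes> inv g \<in> H"
  by (rule normal.inv_op_closed2[OF H_nrm])
lemma H_conj': "g \<in> carrier G \<Longrightarrow> h \<in> H \<Longrightarrow> inv g \<otimes> h \<otimes> g \<in> H"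
  by (rule normal.inv_op_closed1[OF H_nrm])

lemma \<pi>_in: "h \<in> H \<Longrightarrow> \<pi> h \<in> \<Gamma>"
  using \<pi>_hom unfolding hom_def by auto
lemma \<pi>_mult: "h \<in> H \<Longrightarrow> k \<in> H \<Longrightarrow> \<pi> (h \<otimes> k) = \<pi> h \<otimes>\<^bsub>PGL2\<^esub> \<pi> k"
  using \<pi>_hom unfolding hom_def by auto

lemma Xr_in: "h \<in> H \<Longrightarrow> v \<in> Xs \<Longrightarrow> Xr h v \<in> Xs"
  unfolding Xr_def using psi_in \<pi>_in by blast
lemma Xr_comp: "h \<in> H \<Longrightarrow> k \<in> H \<Longrightarrow> v \<in> Xs \<Longrightarrow> Xr (h \<otimes> k) v = Xr h (Xr k v)"
  unfolding Xr_def using psi_comp \<pi>_in \<pi>_mult by simp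
lemma Xr_add: "Xr h (x + y) = Xr h x + Xr h y" unfolding Xr_def by (rule psi_add)
lemma Xr_scale: "Xr h (mscale c x) = mscale c (Xr h x)" unfolding Xr_def by (rule psi_scale)
lemma Xr_zero[simp]: "Xr h 0 = 0" unfolding Xr_def by simp
lemma Xr_sum: "Xr h (sum f A) = (\<Sum>x\<in>A. Xr h (f x))" unfolding Xr_def by (rule psi_sum)

lemma Xr_one: "v \<in> Xs \<Longrightarrow> Xr \<one> v = v"
proof -
  assume v: "v \<in> Xs"
  have "Xr \<one> (Xr \<one> v) = Xr \<one> v" using Xr_comp[OF H_one H_one v] by simp
  thus ?thesis unfolding Xr_def using psi_inj \<Gamma>_PGL \<pi>_in H_one by blast
qed

lemma \<pi>_one: "\<pi> \<one> = \<one>\<^bsub>PGL2\<^esub>"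
  using X_faithful \<pi>_in[OF H_one] Xr_one unfolding Xr_def by blast

lemma Xr_inv: "h \<in> H \<Longrightarrow> v \<in> Xs \<Longrightarrow> Xr (inv h) (Xr h v) = v"
  using Xr_comp[of "inv h" h v] H_inv Xr_one H_carr by simp
lemma Xr_inv': "h \<in> H \<Longrightarrow> v \<in> Xs \<Longrightarrow> Xr h (Xr (inv h) v) = v"
  using Xr_comp[of h "inv h" v] H_inv Xr_one H_carr by simp

lemma Ker_eq: "Ker = {x \<in> H. \<pi> x = \<one>\<^bsub>PGL2\<^esub>}"
  unfolding Ker_def kernel_def by simp

lemma Ker_iff: "k \<in> H \<Longrightarrow> k \<in> Ker \<longleftrightarrow> (\<forall>v\<in>Xs. Xr k v = v)"
  unfolding Ker_eq Xr_def using X_faithful \<pi>_in psi_one by auto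

lemma \<pi>_eq_Ker:
  assumes "h \<in> H" "h' \<in> H" "\<pi> h = \<pi> h'" shows "inv h \<otimes> h' \<in> Ker"
proof -
  have "Xr (inv h \<otimes> h') v = v" if "v \<in> Xs" for v
  proof -
    have "Xr (inv h \<otimes> h') v = Xr (inv h) (Xr h' v)" using Xr_comp[of "inv h" h' v] assms H_inv that by simp
    also have "\<dots> = Xr (inv h) (Xr h v)" using assms(3) unfolding Xr_def by simp
    also have "\<dots> = v" using Xr_inv assms that by simp
    finally show ?thesis .
  qed
  thus ?thesis using Ker_iff assms H_mult H_inv by blast
qed

lemma Ker_\<pi>_eq:
  assumes "h \<in> H" "k \<in> Ker" shows "\<pi> (h \<otimes> k) = \<pi> h"
proof -
  have "k \<in> H" "\<pi> k = \<one>\<^bsub>PGL2\<^esub>" using assms(2) unfolding Ker_eq by auto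
  hence "\<pi> (h \<otimes> k) = \<pi> h \<otimes>\<^bsub>PGL2\<^esub> \<one>\<^bsub>PGL2\<^esub>" using \<pi>_mult assms(1) by simp
  also have "\<dots> = \<pi> h" by (rule PGL2_r_one[OF \<Gamma>_PGL[OF \<pi>_in[OF assms(1)]]])
  finally show ?thesis .
qed

end



context L47 begin

lemma cancel1: "z \<in> carrier G \<Longrightarrow> x \<in> carrier G \<Longrightarrow> inv z \<otimes> (z \<otimes> x) = x"
  by (simp add: m_assoc[symmetric])
lemma cancel2: "z \<in> carrier G \<Longrightarrow> x \<in> carrier G \<Longrightarrow> z \<otimes> (inv z \<otimes> x) = x"
  by (simp add: m_assoc[symmetric])

lemma conj_mult: "z \<in> carrier G \<Longrightarrow> h \<in> carrier G \<Longrightarrow> k \<in> carrier G \<Longrightarrow>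
   z \<otimes> (h \<otimes> k) \<otimes> inv z = (z \<otimes> h \<otimes> inv z) \<otimes> (z \<otimes> k \<otimes> inv z)"
  by (simp add: m_assoc cancel1)

lemma conj_inv_conj: "z \<in> carrier G \<Longrightarrow> h \<in> carrier G \<Longrightarrow> z \<otimes> (inv z \<otimes> h \<otimes> z) \<otimes> inv z = h"
  by (simp add: m_assoc cancel2)
lemma inv_conj_conj: "z \<in> carrier G \<Longrightarrow> h \<in> carrier G \<Longrightarrow> inv z \<otimes> (z \<otimes> h \<otimes> inv z) \<otimes> z = h"
  by (simp add: m_assoc cancel1)

lemma Ker_H: "k \<in> Ker \<Longrightarrow> k \<in> H" unfolding Ker_eq by simp
lemma Ker_carr: "Ker \<subseteq> carrier G" using Ker_H H_carr by blast

definition normz where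
  "normz z \<longleftrightarrow> z \<in> carrier G \<and> (\<forall>k\<in>Ker. z \<otimes> k \<otimes> inv z \<in> Ker) \<and> (\<forall>k\<in>Ker. inv z \<otimes> k \<otimes> z \<in> Ker)"

lemma normalizer_iff: "z \<in> normalizer G Ker \<longleftrightarrow> normz z"
proof -
  have eq: "(\<lambda>H\<in>{H. H \<subseteq> carrier G}. z <# H #> inv z) Ker = z <# Ker #> inv z"
    using Ker_carr by simp
  have cs: "z <# Ker #> inv z = (\<lambda>k. z \<otimes> k \<otimes> inv z) ` Ker"
    unfolding l_coset_def r_coset_def by auto
  show ?thesis
  proof
    assume "z \<in> normalizer G Ker"
    hence "z \<in> carrier G \<and> z <# Ker #> inv z = Ker"
      unfolding normalizer_def stabilizer_def using Ker_carr by simp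
    hence z: "z \<in> carrier G" and e: "(\<lambda>k. z \<otimes> k \<otimes> inv z) ` Ker = Ker"
      using cs by auto
    have 1: "\<forall>k\<in>Ker. z \<otimes> k \<otimes> inv z \<in> Ker" using e by blast
    have 2: "inv z \<otimes> k \<otimes> z \<in> Ker" if k: "k \<in> Ker" for k
    proof -
      from k e obtain k' where k': "k' \<in> Ker" "k = z \<otimes> k' \<otimes> inv z" by blast
      hence "inv z \<otimes> k \<otimes> z = k'" using inv_conj_conj z Ker_carr by blast
      thus ?thesis using k' by simp
    qed
    show "normz z" unfolding normz_def using z 1 2 by blast
  next
    assume n: "normz z"
    hence z: "z \<in> carrier G" unfolding normz_def by blast
    have "(\<lambda>k. z \<otimes> k \<otimes> inv z) ` Ker = Ker"
    proof
      show "(\<lambda>k. z \<otimes> k \<otimes> inv z) ` Ker \<subseteq> Ker" using n unfolding normz_def by blast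
      show "Ker \<subseteq> (\<lambda>k. z \<otimes> k \<otimes> inv z) ` Ker"
      proof
        fix k assume k: "k \<in> Ker"
        hence "inv z \<otimes> k \<otimes> z \<in> Ker" using n unfolding normz_def by blast
        moreover have "k = z \<otimes> (inv z \<otimes> k \<otimes> z) \<otimes> inv z" using conj_inv_conj z k Ker_carr by auto
        ultimately show "k \<in> (\<lambda>k. z \<otimes> k \<otimes> inv z) ` Ker" by blast
      qed
    qed
    thus "z \<in> normalizer G Ker"
      unfolding normalizer_def stabilizer_def using z Ker_carr by (simp add: cs)
  qed
qed

lemma sigma_eq:
  assumes n: "normz z" and h: "h \<in> H"
  shows "conj_aut G H \<pi> z (\<pi> h) = \<pi> (z \<otimes> h \<otimes> inv z)"
proof -
  have z: "z \<in> carrier G" using n unfolding normz_def by blast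
  define h' where "h' = (SOME h'. h' \<in> H \<and> \<pi> h' = \<pi> h)"
  have "h' \<in> H \<and> \<pi> h' = \<pi> h" unfolding h'_def by (rule someI[of _ h]) (simp add: h)
  hence h': "h' \<in> H" "\<pi> h' = \<pi> h" by auto
  define k where "k = inv h \<otimes> h'"
  have k: "k \<in> Ker" unfolding k_def using \<pi>_eq_Ker h h' by simp
  have hk: "h' = h \<otimes> k" unfolding k_def using h h' H_carr by (simp add: m_assoc[symmetric])
  have "z \<otimes> h' \<otimes> inv z = (z \<otimes> h \<otimes> inv z) \<otimes> (z \<otimes> k \<otimes> inv z)"
    unfolding hk by (rule conj_mult[OF z]) (use h k H_carr Ker_carr in auto)
  moreover have "z \<otimes> k \<otimes> inv z \<in> Ker" using n k unfolding normz_def by blast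
  moreover have "z \<otimes> h \<otimes> inv z \<in> H" using H_conj z h by blast
  ultimately have "\<pi> (z \<otimes> h' \<otimes> inv z) = \<pi> (z \<otimes> h \<otimes> inv z)" using Ker_\<pi>_eq by simp
  thus ?thesis unfolding conj_aut_def h'_def[symmetric] by simp
qed

definition intw :: "'g \<Rightarrow> ('e^2^2 \<Rightarrow> 'e^2^2) \<Rightarrow> bool" where
  "intw z L \<longleftrightarrow> z \<in> carrier G \<and> bij_betw L Xs Xs \<and> (\<forall>x\<in>Xs. \<forall>y\<in>Xs. L (x + y) = L x + L y)
     \<and> (\<forall>c. \<forall>x\<in>Xs. L (mscale c x) = mscale c (L x))
     \<and> (\<forall>h\<in>H. \<forall>u\<in>Xs. L (Xr (z \<otimes> h \<otimes> inv z) u) = Xr h (L u))"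

lemma NN_intw: assumes "z \<in> NN" shows "\<exists>L. intw z L"
proof -
  have n: "normz z" and A: "conj_aut G H \<pi> z \<in> Aut_Psi \<Gamma> Xs"
    using assms unfolding NN_def Nsub_def Ker_def[symmetric] normalizer_iff by auto
  have z: "z \<in> carrier G" using n unfolding normz_def by blast
  from A obtain T where T: "bij_betw T Xs Xs" "\<forall>x\<in>Xs. \<forall>y\<in>Xs. T (x + y) = T x + T y"
    "\<forall>c. \<forall>x\<in>Xs. T (mscale c x) = mscale c (T x)"
    "\<forall>a\<in>\<Gamma>. \<forall>x\<in>Xs. T (psi (conj_aut G H \<pi> z a) x) = psi a (T x)"
    unfolding Aut_Psi_def rep_iso_def by auto
  have "\<forall>h\<in>H. \<forall>u\<in>Xs. T (Xr (z \<otimes> h \<otimes> inv z) u) = Xr h (T u)"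
  proof (intro ballI)
    fix h u assume h: "h \<in> H" and u: "u \<in> Xs"
    have "T (psi (conj_aut G H \<pi> z (\<pi> h)) u) = psi (\<pi> h) (T u)" using T(4) \<pi>_in[OF h] u by blast
    thus "T (Xr (z \<otimes> h \<otimes> inv z) u) = Xr h (T u)" using sigma_eq[OF n h] unfolding Xr_def by simp
  qed
  thus ?thesis unfolding intw_def using z T by blast
qed

lemma intw_NN: assumes L: "intw z L" shows "z \<in> NN"
proof -
  have z: "z \<in> carrier G" and bij: "bij_betw L Xs Xs"
    and Lint: "\<And>h u. h \<in> H \<Longrightarrow> u \<in> Xs \<Longrightarrow> L (Xr (z \<otimes> h \<otimes> inv z) u) = Xr h (L u)"
    using L unfolding intw_def by auto
  have inj: "inj_on L Xs" and surj: "L ` Xs = Xs" using bij unfolding bij_betw_def by auto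
  have c1: "z \<otimes> k \<otimes> inv z \<in> Ker" if k: "k \<in> Ker" for k
  proof -
    have kH: "k \<in> H" using k Ker_H by blast
    have zk: "z \<otimes> k \<otimes> inv z \<in> H" using H_conj z kH by blast
    have "Xr (z \<otimes> k \<otimes> inv z) v = v" if v: "v \<in> Xs" for v
    proof -
      have "L (Xr (z \<otimes> k \<otimes> inv z) v) = Xr k (L v)" using Lint kH v by blast
      also have "\<dots> = L v" using Ker_iff[OF kH] k bij_betwE[OF bij] v by simp
      finally have "L (Xr (z \<otimes> k \<otimes> inv z) v) = L v" .
      thus ?thesis using inj_onD[OF inj] v Xr_in[OF zk v] by simp
    qed
    thus ?thesis using Ker_iff zk by blast
  qed
  have c2: "inv z \<otimes> k \<otimes> z \<in> Ker" if k: "k \<in> Ker" for k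
  proof -
    have kH: "k \<in> H" using k Ker_H by blast
    have hH: "inv z \<otimes> k \<otimes> z \<in> H" using H_conj' z kH by blast
    have e: "z \<otimes> (inv z \<otimes> k \<otimes> z) \<otimes> inv z = k" using conj_inv_conj z kH H_carr by blast
    have "Xr (inv z \<otimes> k \<otimes> z) w = w" if w: "w \<in> Xs" for w
    proof -
      obtain u where u: "u \<in> Xs" "w = L u" using surj w by blast
      have "Xr (inv z \<otimes> k \<otimes> z) (L u) = L (Xr k u)" using Lint[OF hH u(1)] e by simp
      also have "\<dots> = L u" using Ker_iff kH k u by simp
      finally show ?thesis using u by simp
    qed
    thus ?thesis using Ker_iff hH by blast
  qed
  have n: "normz z" unfolding normz_def using z c1 c2 by blast
  let ?\<sigma> = "conj_aut G H \<pi> z"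
  have se: "\<And>h. h \<in> H \<Longrightarrow> ?\<sigma> (\<pi> h) = \<pi> (z \<otimes> h \<otimes> inv z)" using sigma_eq[OF n] by blast
  have hom: "?\<sigma> \<in> hom (PGL2\<lparr>carrier := \<Gamma>\<rparr>) (PGL2\<lparr>carrier := \<Gamma>\<rparr>)"
  proof (rule homI)
    fix a assume "a \<in> carrier (PGL2\<lparr>carrier := \<Gamma>\<rparr>)"
    then obtain h where h: "h \<in> H" "a = \<pi> h" using \<pi>_surj by auto
    show "?\<sigma> a \<in> carrier (PGL2\<lparr>carrier := \<Gamma>\<rparr>)" using h se H_conj z \<pi>_in by simp
  next
    fix a b assume "a \<in> carrier (PGL2\<lparr>carrier := \<Gamma>\<rparr>)" "b \<in> carrier (PGL2\<lparr>carrier := \<Gamma>\<rparr>)"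
    then obtain h k where h: "h \<in> H" "a = \<pi> h" and k: "k \<in> H" "b = \<pi> k" using \<pi>_surj by auto
    have "a \<otimes>\<^bsub>PGL2\<lparr>carrier := \<Gamma>\<rparr>\<^esub> b = \<pi> (h \<otimes> k)" using h k \<pi>_mult by simp
    hence "?\<sigma> (a \<otimes>\<^bsub>PGL2\<lparr>carrier := \<Gamma>\<rparr>\<^esub> b) = \<pi> (z \<otimes> (h \<otimes> k) \<otimes> inv z)" using se H_mult h k by simp
    also have "\<dots> = \<pi> ((z \<otimes> h \<otimes> inv z) \<otimes> (z \<otimes> k \<otimes> inv z))"
      using conj_mult z h k H_carr by simp
    also have "\<dots> = \<pi> (z \<otimes> h \<otimes> inv z) \<otimes>\<^bsub>PGL2\<^esub> \<pi> (z \<otimes> k \<otimes> inv z)"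
      using \<pi>_mult H_conj z h k by simp
    finally show "?\<sigma> (a \<otimes>\<^bsub>PGL2\<lparr>carrier := \<Gamma>\<rparr>\<^esub> b) = ?\<sigma> a \<otimes>\<^bsub>PGL2\<lparr>carrier := \<Gamma>\<rparr>\<^esub> ?\<sigma> b"
      using se h k by simp
  qed
  have "inj_on ?\<sigma> \<Gamma>"
  proof (rule inj_onI)
    fix a b assume ab: "a \<in> \<Gamma>" "b \<in> \<Gamma>" "?\<sigma> a = ?\<sigma> b"
    then obtain h k where h: "h \<in> H" "a = \<pi> h" and k: "k \<in> H" "b = \<pi> k" using \<pi>_surj by auto
    have zh: "z \<otimes> h \<otimes> inv z \<in> H" and zk: "z \<otimes> k \<otimes> inv z \<in> H" using H_conj z h k by auto
    have "\<pi> (z \<otimes> h \<otimes> inv z) = \<pi> (z \<otimes> k \<otimes> inv z)" using ab h k se by simp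
    hence "inv (z \<otimes> h \<otimes> inv z) \<otimes> (z \<otimes> k \<otimes> inv z) \<in> Ker" using \<pi>_eq_Ker zh zk by blast
    moreover have "inv (z \<otimes> h \<otimes> inv z) \<otimes> (z \<otimes> k \<otimes> inv z) = z \<otimes> (inv h \<otimes> k) \<otimes> inv z"
      using z h k H_carr by (simp add: inv_mult_group m_assoc cancel1)
    ultimately have "z \<otimes> (inv h \<otimes> k) \<otimes> inv z \<in> Ker" by simp
    hence "inv z \<otimes> (z \<otimes> (inv h \<otimes> k) \<otimes> inv z) \<otimes> z \<in> Ker" using c2 by blast
    hence "inv h \<otimes> k \<in> Ker" using inv_conj_conj z h k H_carr by simp
    hence "\<pi> (h \<otimes> (inv h \<otimes> k)) = \<pi> h" using Ker_\<pi>_eq h by blast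
    thus "a = b" using h k H_carr by (simp add: m_assoc[symmetric])
  qed
  moreover have "?\<sigma> ` \<Gamma> = \<Gamma>"
  proof
    show "?\<sigma> ` \<Gamma> \<subseteq> \<Gamma>" using hom unfolding hom_def by auto
    show "\<Gamma> \<subseteq> ?\<sigma> ` \<Gamma>"
    proof
      fix a assume "a \<in> \<Gamma>"
      then obtain h where h: "h \<in> H" "a = \<pi> h" using \<pi>_surj by auto
      have h': "inv z \<otimes> h \<otimes> z \<in> H" using H_conj' z h by blast
      have "?\<sigma> (\<pi> (inv z \<otimes> h \<otimes> z)) = a" using se[OF h'] conj_inv_conj z h H_carr by simp
      thus "a \<in> ?\<sigma> ` \<Gamma>" using \<pi>_in h' by blast
    qed
  qed
  ultimately have "?\<sigma> \<in> iso (PGL2\<lparr>carrier := \<Gamma>\<rparr>) (PGL2\<lparr>carrier := \<Gamma>\<rparr>)"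
    using hom unfolding iso_def bij_betw_def by simp
  moreover have "rep_iso mscale mscale (PGL2\<lparr>carrier := \<Gamma>\<rparr>) (\<lambda>a. psi (?\<sigma> a)) Xs psi Xs"
    unfolding rep_iso_def
  proof (rule exI[of _ L], intro conjI)
    show "bij_betw L Xs Xs" by fact
    show "\<forall>x\<in>Xs. \<forall>y\<in>Xs. L (x + y) = L x + L y" "\<forall>c. \<forall>x\<in>Xs. L (mscale c x) = mscale c (L x)"
      using L unfolding intw_def by auto
    show "\<forall>k\<in>carrier (PGL2\<lparr>carrier := \<Gamma>\<rparr>). \<forall>x\<in>Xs. L (psi (?\<sigma> k) x) = psi k (L x)"
    proof (intro ballI)
      fix a x assume a: "a \<in> carrier (PGL2\<lparr>carrier := \<Gamma>\<rparr>)" and x: "x \<in> Xs"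
      then obtain h where h: "h \<in> H" "a = \<pi> h" using \<pi>_surj by auto
      show "L (psi (?\<sigma> a) x) = psi a (L x)" using Lint[OF h(1) x] se[OF h(1)] h(2) unfolding Xr_def by simp
    qed
  qed
  ultimately have "?\<sigma> \<in> Aut_Psi \<Gamma> Xs" unfolding Aut_Psi_def by blast
  moreover have "z \<in> normalizer G Ker" using n normalizer_iff by blast
  ultimately show ?thesis unfolding NN_def Nsub_def Ker_def by blast
qed

end



context L47 begin

lemma intw_one: "intw \<one> id"
  unfolding intw_def by (simp add: bij_betw_id H_carr)

lemma intw_H: assumes h0: "h0 \<in> H" shows "intw h0 (Xr (inv h0))"
proof -
  have h0c: "h0 \<in> carrier G" using H_carr h0 by blast
  have ih0: "inv h0 \<in> H" using H_inv h0 by blast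
  have bij: "bij_betw (Xr (inv h0)) Xs Xs"
  proof (rule bij_betwI[of _ _ _ "Xr h0"])
    show "Xr (inv h0) \<in> Xs \<rightarrow> Xs" using Xr_in ih0 by blast
    show "Xr h0 \<in> Xs \<rightarrow> Xs" using Xr_in h0 by blast
    show "\<And>x. x \<in> Xs \<Longrightarrow> Xr h0 (Xr (inv h0) x) = x" using Xr_inv' h0 by blast
    show "\<And>y. y \<in> Xs \<Longrightarrow> Xr (inv h0) (Xr h0 y) = y" using Xr_inv h0 by blast
  qed
  have "Xr (inv h0) (Xr (h0 \<otimes> h \<otimes> inv h0) u) = Xr h (Xr (inv h0) u)" if h: "h \<in> H" and u: "u \<in> Xs" for h u
  proof -
    have hc: "h \<in> carrier G" using H_carr h by blast
    have c: "h0 \<otimes> h \<otimes> inv h0 \<in> H" using H_conj h0c h by blast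
    have "Xr (inv h0) (Xr (h0 \<otimes> h \<otimes> inv h0) u) = Xr (inv h0 \<otimes> (h0 \<otimes> h \<otimes> inv h0)) u"
      using Xr_comp[OF ih0 c u] by simp
    also have "inv h0 \<otimes> (h0 \<otimes> h \<otimes> inv h0) = h \<otimes> inv h0" using h0c hc by (simp add: m_assoc cancel1)
    also have "Xr (h \<otimes> inv h0) u = Xr h (Xr (inv h0) u)" using Xr_comp[OF h ih0 u] .
    finally show ?thesis .
  qed
  thus ?thesis unfolding intw_def using h0c bij by (simp add: Xr_add Xr_scale)
qed

lemma intw_mult:
  assumes L1: "intw z1 L1" and L2: "intw z2 L2" shows "intw (z1 \<otimes> z2) (L2 \<circ> L1)"
proof -
  have z1: "z1 \<in> carrier G" and b1: "bij_betw L1 Xs Xs"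
    and a1: "\<forall>x\<in>Xs. \<forall>y\<in>Xs. L1 (x + y) = L1 x + L1 y"
    and s1: "\<forall>c. \<forall>x\<in>Xs. L1 (mscale c x) = mscale c (L1 x)"
    and i1: "\<forall>h\<in>H. \<forall>u\<in>Xs. L1 (Xr (z1 \<otimes> h \<otimes> inv z1) u) = Xr h (L1 u)"
    using L1 unfolding intw_def by auto
  have z2: "z2 \<in> carrier G" and b2: "bij_betw L2 Xs Xs"
    and a2: "\<forall>x\<in>Xs. \<forall>y\<in>Xs. L2 (x + y) = L2 x + L2 y"
    and s2: "\<forall>c. \<forall>x\<in>Xs. L2 (mscale c x) = mscale c (L2 x)"
    and i2: "\<forall>h\<in>H. \<forall>u\<in>Xs. L2 (Xr (z2 \<otimes> h \<otimes> inv z2) u) = Xr h (L2 u)"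
    using L2 unfolding intw_def by auto
  have m1: "L1 x \<in> Xs" if "x \<in> Xs" for x using b1 that bij_betwE by blast
  have i: "(L2 \<circ> L1) (Xr (z1 \<otimes> z2 \<otimes> h \<otimes> inv (z1 \<otimes> z2)) u) = Xr h ((L2 \<circ> L1) u)" if h: "h \<in> H" and u: "u \<in> Xs" for h u
  proof -
    have hc: "h \<in> carrier G" using H_carr h by blast
    have k: "z2 \<otimes> h \<otimes> inv z2 \<in> H" using H_conj z2 h by blast
    have e: "z1 \<otimes> z2 \<otimes> h \<otimes> inv (z1 \<otimes> z2) = z1 \<otimes> (z2 \<otimes> h \<otimes> inv z2) \<otimes> inv z1"
      using z1 z2 hc by (simp add: inv_mult_group m_assoc)
    have "L1 (Xr (z1 \<otimes> z2 \<otimes> h \<otimes> inv (z1 \<otimes> z2)) u) = Xr (z2 \<otimes> h \<otimes> inv z2) (L1 u)"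
      unfolding e using i1 k u by blast
    thus ?thesis using i2 h m1[OF u] by simp
  qed
  have "\<forall>x\<in>Xs. \<forall>y\<in>Xs. (L2 \<circ> L1) (x + y) = (L2 \<circ> L1) x + (L2 \<circ> L1) y" using a1 a2 m1 by simp
  moreover have "\<forall>c. \<forall>x\<in>Xs. (L2 \<circ> L1) (mscale c x) = mscale c ((L2 \<circ> L1) x)" using s1 s2 m1 by simp
  moreover have "bij_betw (L2 \<circ> L1) Xs Xs" using bij_betw_trans b1 b2 by blast
  ultimately show ?thesis unfolding intw_def using z1 z2 i by simp
qed

lemma intw_inv:
  assumes L: "intw z L" shows "intw (inv z) (inv_into Xs L)"
proof -
  have z: "z \<in> carrier G" and b: "bij_betw L Xs Xs"
    and a: "\<forall>x\<in>Xs. \<forall>y\<in>Xs. L (x + y) = L x + L y"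
    and s: "\<forall>c. \<forall>x\<in>Xs. L (mscale c x) = mscale c (L x)"
    and i: "\<forall>h\<in>H. \<forall>u\<in>Xs. L (Xr (z \<otimes> h \<otimes> inv z) u) = Xr h (L u)"
    using L unfolding intw_def by auto
  let ?L = "inv_into Xs L"
  have b': "bij_betw ?L Xs Xs" using bij_betw_inv_into b by blast
  have inj: "inj_on L Xs" using b bij_betw_def by blast
  have m: "?L y \<in> Xs" if "y \<in> Xs" for y using b' that bij_betwE by blast
  have LL: "L (?L y) = y" if "y \<in> Xs" for y using b that bij_betw_inv_into_right by fastforce
  have LL': "?L (L x) = x" if "x \<in> Xs" for x using b that bij_betw_inv_into_left by fastforce
  have mL: "L x \<in> Xs" if "x \<in> Xs" for x using b that bij_betwE by blast
  have add: "?L (x + y) = ?L x + ?L y" if "x \<in> Xs" "y \<in> Xs" for x y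
  proof -
    have "L (?L x + ?L y) = x + y" using a m LL that by simp
    hence "?L (L (?L x + ?L y)) = ?L (x + y)" by simp
    thus ?thesis using LL' m that Xs_add by simp
  qed
  have sc: "?L (mscale c x) = mscale c (?L x)" if "x \<in> Xs" for c x
  proof -
    have "L (mscale c (?L x)) = mscale c x" using s m LL that by simp
    hence "?L (L (mscale c (?L x))) = ?L (mscale c x)" by simp
    thus ?thesis using LL' m that Xs_scale by simp
  qed
  have it: "?L (Xr (inv z \<otimes> h \<otimes> inv (inv z)) u) = Xr h (?L u)" if h: "h \<in> H" and u: "u \<in> Xs" for h u
  proof -
    have hc: "h \<in> carrier G" using H_carr h by blast
    have k: "inv z \<otimes> h \<otimes> z \<in> H" using H_conj' z h by blast
    have e: "z \<otimes> (inv z \<otimes> h \<otimes> z) \<otimes> inv z = h" using conj_inv_conj z hc by blast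
    have "L (Xr h (?L u)) = Xr (inv z \<otimes> h \<otimes> z) (L (?L u))" using i k m[OF u] e by metis
    hence "L (Xr h (?L u)) = Xr (inv z \<otimes> h \<otimes> z) u" using LL u by simp
    hence "?L (L (Xr h (?L u))) = ?L (Xr (inv z \<otimes> h \<otimes> z) u)" by simp
    thus ?thesis using LL' Xr_in h m u z by simp
  qed
  show ?thesis unfolding intw_def using z b' add sc it by simp
qed

lemma NN_carr: "z \<in> NN \<Longrightarrow> z \<in> carrier G"
  using NN_intw intw_def by blast
lemma one_NN: "\<one> \<in> NN" using intw_NN intw_one by blast
lemma H_NN: "h \<in> H \<Longrightarrow> h \<in> NN" using intw_NN intw_H by blast
lemma NN_mult: "a \<in> NN \<Longrightarrow> b \<in> NN \<Longrightarrow> a \<otimes> b \<in> NN"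
  using NN_intw intw_NN intw_mult by metis
lemma NN_inv: "a \<in> NN \<Longrightarrow> inv a \<in> NN"
  using NN_intw intw_NN intw_inv by metis
lemma NN_cancel: "n \<in> NN \<Longrightarrow> x \<in> carrier G \<Longrightarrow> n \<otimes> x \<in> NN \<Longrightarrow> x \<in> NN"
proof -
  assume n: "n \<in> NN" and x: "x \<in> carrier G" and nx: "n \<otimes> x \<in> NN"
  have "inv n \<otimes> (n \<otimes> x) \<in> NN" using NN_mult NN_inv n nx by blast
  thus ?thesis using cancel1 NN_carr n x by simp
qed
lemma NN_cancel_r: "n \<in> NN \<Longrightarrow> x \<in> carrier G \<Longrightarrow> x \<otimes> n \<in> NN \<Longrightarrow> x \<in> NN"
proof -
  assume n: "n \<in> NN" and x: "x \<in> carrier G" and nx: "x \<otimes> n \<in> NN"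
  have "(x \<otimes> n) \<otimes> inv n \<in> NN" using NN_mult NN_inv n nx by blast
  thus ?thesis using NN_carr n x by (simp add: m_assoc)
qed

lemma schur:
  assumes z: "z \<in> carrier G"
    and Tin: "\<And>u. u \<in> Xs \<Longrightarrow> T u \<in> Xs"
    and Tadd: "\<And>x y. x \<in> Xs \<Longrightarrow> y \<in> Xs \<Longrightarrow> T (x + y) = T x + T y"
    and Tsc: "\<And>c x. x \<in> Xs \<Longrightarrow> T (mscale c x) = mscale c (T x)"
    and Tint: "\<And>h u. h \<in> H \<Longrightarrow> u \<in> Xs \<Longrightarrow> T (Xr (z \<otimes> h \<otimes> inv z) u) = Xr h (T u)"
    and nz: "u0 \<in> Xs" "T u0 \<noteq> 0"
  shows "z \<in> NN"
proof -
  have T0: "T 0 = 0" using Tadd[OF Xs_0 Xs_0] by simp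
  have aH: "\<exists>h\<in>H. psi a = Xr (z \<otimes> h \<otimes> inv z)" if aG: "a \<in> \<Gamma>" for a
  proof -
    obtain h' where h': "h' \<in> H" "a = \<pi> h'" using \<pi>_surj aG by auto
    have "inv z \<otimes> h' \<otimes> z \<in> H" using H_conj' z h' by blast
    moreover have "z \<otimes> (inv z \<otimes> h' \<otimes> z) \<otimes> inv z = h'" using conj_inv_conj z h' H_carr by blast
    ultimately show ?thesis using h' unfolding Xr_def by metis
  qed
  define K where "K = {u \<in> Xs. T u = 0}"
  have "is_subspace mscale K" unfolding is_subspace_def K_def
    using Xs_0 Xs_add Xs_scale T0 Tadd Tsc by simp
  moreover have "psi a v \<in> K" if av: "a \<in> \<Gamma>" "v \<in> K" for a v
  proof -
    obtain h where h: "h \<in> H" "psi a = Xr (z \<otimes> h \<otimes> inv z)" using aH av(1) by blast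
    have "psi a v \<in> Xs" using psi_in av unfolding K_def by blast
    moreover have "T (psi a v) = 0" using h Tint av unfolding K_def by simp
    ultimately show ?thesis unfolding K_def by simp
  qed
  moreover have "K \<subseteq> Xs" unfolding K_def by blast
  ultimately have "K = {0} \<or> K = Xs" using X_irred by blast
  moreover have "K \<noteq> Xs" using nz unfolding K_def by blast
  ultimately have K0: "K = {0}" by blast
  have inj: "inj_on T Xs"
  proof (rule inj_onI)
    fix x y assume x: "x \<in> Xs" and y: "y \<in> Xs" and e: "T x = T y"
    have "T (x + mscale (-1) y) = T x + mscale (-1) (T y)" using Tadd Tsc x y Xs_scale by simp
    also have "\<dots> = 0" using e by (simp add: mscale_def vec_eq_iff)
    finally have "x + mscale (-1) y \<in> K" unfolding K_def using x y Xs_add Xs_scale by simp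
    hence "x + mscale (-1) y = 0" using K0 by blast
    thus "x = y" by (simp add: mscale_def vec_eq_iff)
  qed
  define I where "I = T ` Xs"
  have "is_subspace mscale I" unfolding is_subspace_def I_def
  proof (intro conjI ballI allI)
    show "0 \<in> T ` Xs" using T0 Xs_0 by force
    fix x y assume "x \<in> T ` Xs" "y \<in> T ` Xs"
    then obtain a b where "a \<in> Xs" "b \<in> Xs" "x = T a" "y = T b" by blast
    thus "x + y \<in> T ` Xs" using Tadd Xs_add by (metis imageI)
  next
    fix c x assume "x \<in> T ` Xs"
    then obtain a where "a \<in> Xs" "x = T a" by blast
    thus "mscale c x \<in> T ` Xs" using Tsc Xs_scale by (metis imageI)
  qed
  moreover have "psi a v \<in> I" if av: "a \<in> \<Gamma>" "v \<in> I" for a v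
  proof -
    obtain h where h: "h \<in> H" "a = \<pi> h" using \<pi>_surj av(1) by auto
    obtain u where u: "u \<in> Xs" "v = T u" using av(2) unfolding I_def by blast
    have c: "z \<otimes> h \<otimes> inv z \<in> H" using H_conj z h by blast
    have "psi a v = T (Xr (z \<otimes> h \<otimes> inv z) u)" using Tint h u unfolding Xr_def by simp
    thus ?thesis unfolding I_def using Xr_in c u by blast
  qed
  moreover have "I \<subseteq> Xs" unfolding I_def using Tin by blast
  ultimately have "I = {0} \<or> I = Xs" using X_irred by blast
  moreover have "I \<noteq> {0}" using nz unfolding I_def by blast
  ultimately have "T ` Xs = Xs" unfolding I_def by blast
  hence "bij_betw T Xs Xs" using inj unfolding bij_betw_def by blast
  hence "intw z T" unfolding intw_def using z Tadd Tsc Tint by blast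
  thus ?thesis by (rule intw_NN)
qed

end



interpretation ms: vector_space "mscale :: 'e::field \<Rightarrow> 'e^2^2 \<Rightarrow> 'e^2^2"
  by unfold_locales (simp_all add: mscale_def vec_eq_iff algebra_simps)

lemma mscale_sum: "mscale c (sum f A) = (\<Sum>a\<in>A. mscale c (f a))"
  by (simp add: vec_eq_iff sum_distrib_left)
lemma mscale_add_left: "mscale (a + b) M = mscale a M + mscale b M"
  by (simp add: vec_eq_iff distrib_right)
lemma sum_fun_apply: "(\<Sum>i\<in>A. f i) x = (\<Sum>i\<in>A. f i x)"
  by (induction A rule: infinite_finite_induct) simp_all

context L47 begin

lemma H_fin: "finite H"
proof (rule finite_subset[OF _ G_fin])
  show "H \<subseteq> carrier G" using H_carr by blast
qed

lemma reindex_H: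
  assumes g: "g \<in> H" shows "(\<Sum>h\<in>H. F (h \<otimes> g)) = (\<Sum>h\<in>H. F h)"
proof -
  have gc: "g \<in> carrier G" using g H_carr by blast
  have "bij_betw (\<lambda>h. h \<otimes> g) H H"
  proof (rule bij_betwI[of _ _ _ "\<lambda>h. h \<otimes> inv g"])
    show "(\<lambda>h. h \<otimes> g) \<in> H \<rightarrow> H" using H_mult g by blast
    show "(\<lambda>h. h \<otimes> inv g) \<in> H \<rightarrow> H" using H_mult H_inv g by blast
    show "\<And>x. x \<in> H \<Longrightarrow> x \<otimes> g \<otimes> inv g = x" using gc H_carr by (simp add: m_assoc)
    show "\<And>y. y \<in> H \<Longrightarrow> y \<otimes> inv g \<otimes> g = y" using gc H_carr by (simp add: m_assoc)
  qed
  thus ?thesis by (rule sum.reindex_bij_betw)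
qed

lemma separation:
  assumes v: "v \<in> Xs" "v \<noteq> 0"
  shows "\<exists>c. (\<forall>w\<in>carrier G. w \<notin> NN \<longrightarrow> (\<forall>u\<in>Xs. (\<Sum>h\<in>H. mscale (c h) (Xr (w \<otimes> h \<otimes> inv w) u)) = 0))
            \<and> (\<Sum>h\<in>H. mscale (c h) (Xr h v)) \<noteq> 0"
proof -
  obtain Bs where Bs: "Bs \<subseteq> Xs" "ms.independent Bs" "Xs \<subseteq> ms.span Bs"
    using ms.maximal_independent_subset by blast
  define r where "r u b = ms.representation Bs u b" for u b
  have insp: "u \<in> ms.span Bs" if "u \<in> Xs" for u using Bs(3) that by blast
  have r_add: "r (x + y) b = r x b + r y b" if "x \<in> Xs" "y \<in> Xs" for x y b
    unfolding r_def using ms.representation_add[OF Bs(2) insp[OF that(2)] insp[OF that(1)]] by simp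
  have r_sc: "r (mscale c x) b = c * r x b" if "x \<in> Xs" for x c b
    unfolding r_def using ms.representation_scale[OF Bs(2) insp[OF that]] by simp
  have r_sumH: "r (\<Sum>h\<in>H. mscale (a h) (f h)) b = (\<Sum>h\<in>H. a h * r (f h) b)"
    if "\<And>h. h \<in> H \<Longrightarrow> f h \<in> Xs" for a f b
  proof -
    have "r (\<Sum>h\<in>H. mscale (a h) (f h)) b = (\<Sum>h\<in>H. r (mscale (a h) (f h)) b)"
      unfolding r_def using ms.representation_sum[OF Bs(2), of H "\<lambda>h. mscale (a h) (f h)"] insp that Xs_scale by simp
    thus ?thesis using r_sc that by simp
  qed
  have r_fin: "finite {b. r u b \<noteq> 0}" for u unfolding r_def by (rule ms.finite_representation)
  have r_Bs: "r u b \<noteq> 0 \<Longrightarrow> b \<in> Bs" for u b unfolding r_def by (rule ms.representation_ne_zero)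
  have r_expand: "(\<Sum>b\<in>F. mscale (r u b) b) = u" if "u \<in> Xs" "finite F" "{b. r u b \<noteq> 0} \<subseteq> F" for u F
  proof -
    have "(\<Sum>b\<in>F. mscale (r u b) b) = (\<Sum>b | r u b \<noteq> 0. mscale (r u b) b)"
      by (rule sum.mono_neutral_right) (use that in auto)
    also have "\<dots> = u" unfolding r_def using ms.sum_nonzero_representation_eq[OF Bs(2) insp[OF that(1)]] by simp
    finally show ?thesis .
  qed
  have partA: "(\<Sum>h\<in>H. mscale ((Xr (inv h) b0) $ k $ l) (Xr (w \<otimes> h \<otimes> inv w) u)) = 0"
    if b0: "b0 \<in> Xs" and w: "w \<in> carrier G" "w \<notin> NN" and u: "u \<in> Xs" for b0 k l w u
  proof -
    let ?c = "\<lambda>h. (Xr (inv h) b0) $ k $ l"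
    let ?x = "\<lambda>h. Xr (w \<otimes> h \<otimes> inv w) u"
    have xin: "\<And>h u. h \<in> H \<Longrightarrow> u \<in> Xs \<Longrightarrow> Xr (w \<otimes> h \<otimes> inv w) u \<in> Xs"
      using Xr_in H_conj w(1) by blast
    have T0: "(\<Sum>h\<in>H. mscale (r (Xr (w \<otimes> h \<otimes> inv w) u) b') (Xr (inv h) b0)) = 0" if u: "u \<in> Xs" for b' u
    proof (rule ccontr)
      assume nz: "\<not> ?thesis"
      define T where "T u = (\<Sum>h\<in>H. mscale (r (Xr (w \<otimes> h \<otimes> inv w) u) b') (Xr (inv h) b0))" for u
      have "w \<in> NN"
      proof (rule schur[of w T u])
        show "w \<in> carrier G" by fact
        show "T u \<in> Xs" if "u \<in> Xs" for u unfolding T_def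
          by (intro Xs_sum Xs_scale Xr_in[OF H_inv b0])
        show "T (x + y) = T x + T y" if "x \<in> Xs" "y \<in> Xs" for x y
          unfolding T_def using that xin
          by (simp add: Xr_add r_add mscale_add_left sum.distrib)
        show "T (mscale c x) = mscale c (T x)" if "x \<in> Xs" for c x
          unfolding T_def using that xin
          by (simp add: Xr_scale r_sc mscale_sum)
        show "T (Xr (w \<otimes> g \<otimes> inv w) x) = Xr g (T x)" if g: "g \<in> H" and x: "x \<in> Xs" for g x
        proof -
          have gc: "g \<in> carrier G" using g H_carr by blast
          define F where "F h' = mscale (r (Xr (w \<otimes> h' \<otimes> inv w) x) b') (Xr (g \<otimes> inv h') b0)" for h'
          have "T (Xr (w \<otimes> g \<otimes> inv w) x) = (\<Sum>h\<in>H. F (h \<otimes> g))"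
            unfolding T_def
          proof (rule sum.cong[OF refl])
            fix h assume h: "h \<in> H"
            have hc: "h \<in> carrier G" using h H_carr by blast
            have "Xr (w \<otimes> h \<otimes> inv w) (Xr (w \<otimes> g \<otimes> inv w) x) = Xr ((w \<otimes> h \<otimes> inv w) \<otimes> (w \<otimes> g \<otimes> inv w)) x"
              using Xr_comp H_conj w(1) h g x by simp
            also have "(w \<otimes> h \<otimes> inv w) \<otimes> (w \<otimes> g \<otimes> inv w) = w \<otimes> (h \<otimes> g) \<otimes> inv w"
              using conj_mult[OF w(1) hc gc] by simp
            finally have e1: "Xr (w \<otimes> h \<otimes> inv w) (Xr (w \<otimes> g \<otimes> inv w) x) = Xr (w \<otimes> (h \<otimes> g) \<otimes> inv w) x" .
            have e2: "g \<otimes> inv (h \<otimes> g) = inv h" using hc gc by (simp add: inv_mult_group m_assoc[symmetric])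
            show "mscale (r (Xr (w \<otimes> h \<otimes> inv w) (Xr (w \<otimes> g \<otimes> inv w) x)) b') (Xr (inv h) b0) = F (h \<otimes> g)"
              unfolding F_def e1 e2 by simp
          qed
          also have "\<dots> = (\<Sum>h\<in>H. F h)" by (rule reindex_H[OF g])
          also have "\<dots> = Xr g (T x)" unfolding T_def F_def Xr_sum Xr_scale
          proof (rule sum.cong[OF refl])
            fix h assume h: "h \<in> H"
            show "mscale (r (Xr (w \<otimes> h \<otimes> inv w) x) b') (Xr (g \<otimes> inv h) b0) =
                  mscale (r (Xr (w \<otimes> h \<otimes> inv w) x) b') (Xr g (Xr (inv h) b0))"
              using Xr_comp[OF g H_inv[OF h] b0] by simp
          qed
          finally show ?thesis .
        qed
        show "u \<in> Xs" by fact
        show "T u \<noteq> 0" using nz unfolding T_def by simp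
      qed
      thus False using w(2) by blast
    qed
    let ?F = "\<Union>h\<in>H. {b. r (?x h) b \<noteq> 0}"
    have Ffin: "finite ?F" by (rule finite_UN_I[OF H_fin r_fin])
    have xe: "?x h = (\<Sum>b\<in>?F. mscale (r (?x h) b) b)" if h: "h \<in> H" for h
    proof -
      have sub: "{b. r (?x h) b \<noteq> 0} \<subseteq> ?F" using h by blast
      show ?thesis using r_expand[OF xin[OF h u] Ffin sub] by (rule sym)
    qed
    have z: "(\<Sum>h\<in>H. r (?x h) b' * ?c h) = 0" for b'
    proof -
      have "(\<Sum>h\<in>H. mscale (r (?x h) b') (Xr (inv h) b0)) $ k $ l = 0" using T0[OF u, of b'] by simp
      thus ?thesis by (simp add: mult.commute)
    qed
    show ?thesis
    proof (subst vec_eq_iff, intro allI, subst vec_eq_iff, intro allI)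
      fix i j
      have "(\<Sum>h\<in>H. mscale (?c h) (?x h)) $ i $ j = (\<Sum>h\<in>H. ?c h * (?x h) $ i $ j)"
        by (simp only: sum_component mscale_entry)
      also have "\<dots> = (\<Sum>h\<in>H. ?c h * (\<Sum>b\<in>?F. r (?x h) b * b $ i $ j))"
      proof (rule sum.cong[OF refl])
        fix h assume h: "h \<in> H"
        have "(?x h) $ i $ j = (\<Sum>b\<in>?F. mscale (r (?x h) b) b) $ i $ j"
          by (rule arg_cong[where f="\<lambda>M. M $ i $ j", OF xe[OF h]])
        also have "\<dots> = (\<Sum>b\<in>?F. r (?x h) b * b $ i $ j)" by (simp only: sum_component mscale_entry)
        finally show "?c h * (?x h) $ i $ j = ?c h * (\<Sum>b\<in>?F. r (?x h) b * b $ i $ j)" by (rule arg_cong)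
      qed
      also have "\<dots> = (\<Sum>h\<in>H. \<Sum>b\<in>?F. b $ i $ j * (r (?x h) b * ?c h))"
        by (simp add: sum_distrib_left mult_ac)
      also have "\<dots> = (\<Sum>b\<in>?F. \<Sum>h\<in>H. b $ i $ j * (r (?x h) b * ?c h))"
        by (rule sum.swap)
      also have "\<dots> = (\<Sum>b\<in>?F. b $ i $ j * (\<Sum>h\<in>H. r (?x h) b * ?c h))"
        by (simp add: sum_distrib_left)
      also have "\<dots> = 0" using z by simp
      finally show "(\<Sum>h\<in>H. mscale (?c h) (?x h)) $ i $ j = 0 $ i $ j" by simp
    qed
  qed
  have "\<exists>b0\<in>Bs. \<exists>k l. (\<Sum>h\<in>H. mscale ((Xr (inv h) b0) $ k $ l) (Xr h v)) \<noteq> 0"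
  proof (rule ccontr)
    assume "\<not> ?thesis"
    hence A: "\<And>b0 k l. b0 \<in> Bs \<Longrightarrow> (\<Sum>h\<in>H. mscale ((Xr (inv h) b0) $ k $ l) (Xr h v)) = 0" by blast
    let ?y = "\<lambda>h. Xr h v"
    have yin: "h \<in> H \<Longrightarrow> ?y h \<in> Xs" for h using Xr_in v(1) by blast
    have B: "(\<Sum>h\<in>H. mscale (r (?y h) b') (Xr (inv h) b0)) = 0" if b0: "b0 \<in> Bs" for b0 b'
    proof (subst vec_eq_iff, intro allI, subst vec_eq_iff, intro allI)
      fix k l
      have "(\<Sum>h\<in>H. mscale (r (?y h) b') (Xr (inv h) b0)) $ k $ l = (\<Sum>h\<in>H. (Xr (inv h) b0) $ k $ l * r (?y h) b')"
        by (simp add: mult.commute)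
      also have "\<dots> = r (\<Sum>h\<in>H. mscale ((Xr (inv h) b0) $ k $ l) (?y h)) b'"
        using r_sumH[of ?y] yin by simp
      also have "\<dots> = 0" unfolding r_def A[OF b0] ms.representation_zero by (rule refl)
      finally show "(\<Sum>h\<in>H. mscale (r (?y h) b') (Xr (inv h) b0)) $ k $ l = 0 $ k $ l" by simp
    qed
    let ?F = "\<Union>h\<in>H. {b. r (?y h) b \<noteq> 0}"
    have Ffin: "finite ?F" by (rule finite_UN_I[OF H_fin r_fin])
    have FB: "?F \<subseteq> Bs" using r_Bs by blast
    have "0 = (\<Sum>b\<in>?F. \<Sum>h\<in>H. mscale (r (?y h) b) (Xr (inv h) b))"
      using B FB by (simp add: subset_iff)
    also have "\<dots> = (\<Sum>h\<in>H. \<Sum>b\<in>?F. mscale (r (?y h) b) (Xr (inv h) b))" by (rule sum.swap)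
    also have "\<dots> = (\<Sum>h\<in>H. Xr (inv h) (\<Sum>b\<in>?F. mscale (r (?y h) b) b))"
      by (simp add: Xr_sum Xr_scale)
    also have "\<dots> = (\<Sum>h\<in>H. Xr (inv h) (?y h))"
    proof (rule sum.cong[OF refl])
      fix h assume h: "h \<in> H"
      show "Xr (inv h) (\<Sum>b\<in>?F. mscale (r (?y h) b) b) = Xr (inv h) (?y h)"
      proof -
        have sub: "{b. r (?y h) b \<noteq> 0} \<subseteq> ?F" using h by blast
        show ?thesis using r_expand[OF yin[OF h] Ffin sub] by (rule arg_cong)
      qed
    qed
    also have "\<dots> = (\<Sum>h\<in>H. v)" using Xr_inv v(1) by simp
    finally have S: "(\<Sum>h\<in>H. v) = 0" by simp
    obtain i j where ij: "v $ i $ j \<noteq> 0" using v(2) by (metis vec_eq_iff zero_index)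
    have "(\<Sum>h\<in>H. v) $ i $ j = of_nat (card H) * v $ i $ j" unfolding sum_component by simp
    moreover have "card H \<noteq> 0" using H_fin H_one by auto
    ultimately have "(\<Sum>h\<in>H. v) $ i $ j \<noteq> 0" using ij by simp
    thus False unfolding S by simp
  qed
  then obtain b0 k l where b0: "b0 \<in> Bs" and nz: "(\<Sum>h\<in>H. mscale ((Xr (inv h) b0) $ k $ l) (Xr h v)) \<noteq> 0"
    by blast
  have b0X: "b0 \<in> Xs" using b0 Bs(1) by blast
  show ?thesis
  proof (rule exI[of _ "\<lambda>h. (Xr (inv h) b0) $ k $ l"], intro conjI ballI impI)
    fix w u assume "w \<in> carrier G" "w \<notin> NN" "u \<in> Xs"
    thus "(\<Sum>h\<in>H. mscale ((Xr (inv h) b0) $ k $ l) (Xr (w \<otimes> h \<otimes> inv w) u)) = 0"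
      by (rule partA[OF b0X])
  next
    show "(\<Sum>h\<in>H. mscale ((Xr (inv h) b0) $ k $ l) (Xr h v)) \<noteq> 0" by (rule nz)
  qed
qed

end



lemma lam_zero[simp]: "(\<lambda>x. 0) = (0 :: 'a \<Rightarrow> 'b::zero)" by (simp add: zero_fun_def)
lemma fscale_apply[simp]: "fscale sc c f x = sc c (f x)" by (simp add: fscale_def)
lemma ind_act_apply: "ind_act G L l f x = (if x \<in> L then f (x \<otimes>\<^bsub>G\<^esub> l) else 0)" by (simp add: ind_act_def)
lemma ind_act_add:
  fixes f g :: "'a \<Rightarrow> 'v::monoid_add"
  shows "ind_act G L l (f + g) = ind_act G L l f + ind_act G L l g"
  by (rule ext) (simp add: ind_act_def)
lemma ind_act_zero[simp]: "ind_act G L l (0 :: 'a \<Rightarrow> 'v::zero) = 0"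
  by (rule ext) (simp add: ind_act_def)
lemma ind_act_scale: "(\<And>c. sc c 0 = 0) \<Longrightarrow> ind_act G L l (fscale sc c f) = fscale sc c (ind_act G L l f)"
  by (rule ext) (simp add: ind_act_def)
lemma ind_act_sum:
  fixes f :: "'i \<Rightarrow> 'a \<Rightarrow> 'v::comm_monoid_add"
  shows "ind_act G L l (\<Sum>i\<in>A. f i) = (\<Sum>i\<in>A. ind_act G L l (f i))"
proof (rule ext)
  fix x show "ind_act G L l (\<Sum>i\<in>A. f i) x = (\<Sum>i\<in>A. ind_act G L l (f i)) x"
    by (cases "x \<in> L") (simp_all add: ind_act_def sum_fun_apply)
qed
lemma fscale_mscale_zero[simp]: "fscale mscale c 0 = 0"
  by (rule ext) simp
lemma fscale_add: "(\<And>a b. sc c (a + b) = sc c a + sc c b) \<Longrightarrow> fscale sc c (f + g) = fscale sc c f + fscale sc c g"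
  by (rule ext) simp

context L47 begin

lemma Xr_eq: "(\<lambda>h. psi (\<pi> h)) = Xr" by (rule ext) (simp add: Xr_def)

lemma sub_sum: "is_subspace sc S \<Longrightarrow> (\<And>i. i \<in> I \<Longrightarrow> f i \<in> S) \<Longrightarrow> sum f I \<in> S"
  unfolding is_subspace_def by (induction I rule: infinite_finite_induct) auto

lemma NN_fin: "finite NN"
proof (rule finite_subset[OF _ G_fin])
  show "NN \<subseteq> carrier G" using NN_carr by blast
qed

lemma part1:
  assumes U_sub: "U \<subseteq> ind_space G H NN Xr Xs"
    and U_irr: "irred_rep (fscale mscale) (G\<lparr>carrier := NN\<rparr>) (ind_act G NN) U"
  shows "irred_rep (fscale (fscale mscale)) G (ind_act G (carrier G)) (ind_space G NN (carrier G) (ind_act G NN) U)"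
proof -
  define W where "W = ind_space G NN (carrier G) (ind_act G NN) U"
  have Urep: "is_rep (fscale mscale) (G\<lparr>carrier := NN\<rparr>) (ind_act G NN) U"
    using U_irr unfolding irred_rep_def by blast
  have Usub: "is_subspace (fscale mscale) U" using Urep unfolding is_rep_def by blast
  have U0: "0 \<in> U" using Usub unfolding is_subspace_def by blast
  have Uadd: "u \<in> U \<Longrightarrow> u' \<in> U \<Longrightarrow> u + u' \<in> U" for u u' using Usub unfolding is_subspace_def by blast
  have Usc: "u \<in> U \<Longrightarrow> fscale mscale c u \<in> U" for u c using Usub unfolding is_subspace_def by blast
  have Uact: "n \<in> NN \<Longrightarrow> u \<in> U \<Longrightarrow> ind_act G NN n u \<in> U" for n u
    using Urep unfolding is_rep_def by simp
  have Umul: "k \<in> NN \<Longrightarrow> l \<in> NN \<Longrightarrow> u \<in> U \<Longrightarrow> ind_act G NN (k \<otimes> l) u = ind_act G NN k (ind_act G NN l u)" for k l u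
    using Urep unfolding is_rep_def by simp
  have Uz: "u \<in> U \<Longrightarrow> x \<notin> NN \<Longrightarrow> u x = 0" for u x using U_sub unfolding ind_space_def by blast
  have Uv: "u \<in> U \<Longrightarrow> x \<in> NN \<Longrightarrow> u x \<in> Xs" for u x using U_sub unfolding ind_space_def by blast
  have Uh: "u \<in> U \<Longrightarrow> h \<in> H \<Longrightarrow> x \<in> NN \<Longrightarrow> u (h \<otimes> x) = Xr h (u x)" for u h x
    using U_sub unfolding ind_space_def by blast
  have Wz: "f \<in> W \<Longrightarrow> x \<notin> carrier G \<Longrightarrow> f x = 0" for f x unfolding W_def ind_space_def by blast
  have WU: "f \<in> W \<Longrightarrow> x \<in> carrier G \<Longrightarrow> f x \<in> U" for f x unfolding W_def ind_space_def by blast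
  have Wn: "f \<in> W \<Longrightarrow> n \<in> NN \<Longrightarrow> x \<in> carrier G \<Longrightarrow> f (n \<otimes> x) = ind_act G NN n (f x)" for f n x
    unfolding W_def ind_space_def by blast
  have WI: "f \<in> W" if "\<And>x. x \<notin> carrier G \<Longrightarrow> f x = 0" "\<And>x. x \<in> carrier G \<Longrightarrow> f x \<in> U"
    "\<And>n x. n \<in> NN \<Longrightarrow> x \<in> carrier G \<Longrightarrow> f (n \<otimes> x) = ind_act G NN n (f x)" for f
    unfolding W_def ind_space_def using that by blast
  have fsc0: "\<And>c. fscale mscale c 0 = 0" by simp
  have W0: "0 \<in> W" by (rule WI) (simp_all add: U0)
  have Wadd: "f + g \<in> W" if fg: "f \<in> W" "g \<in> W" for f g
  proof (rule WI)
    show "(f + g) x = 0" if "x \<notin> carrier G" for x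
      using Wz[OF fg(1) that] Wz[OF fg(2) that] by simp
    show "(f + g) x \<in> U" if "x \<in> carrier G" for x
      using Uadd[OF WU[OF fg(1) that] WU[OF fg(2) that]] by simp
    show "(f + g) (n \<otimes> x) = ind_act G NN n ((f + g) x)" if "n \<in> NN" "x \<in> carrier G" for n x
      using Wn[OF fg(1) that] Wn[OF fg(2) that] by (simp add: ind_act_add)
  qed
  have Wsc: "fscale (fscale mscale) c f \<in> W" if f: "f \<in> W" for f c
  proof (rule WI)
    show "fscale (fscale mscale) c f x = 0" if "x \<notin> carrier G" for x
      using Wz[OF f that] by simp
    show "fscale (fscale mscale) c f x \<in> U" if "x \<in> carrier G" for x
      using Usc[OF WU[OF f that]] by simp
    show "fscale (fscale mscale) c f (n \<otimes> x) = ind_act G NN n (fscale (fscale mscale) c f x)" if "n \<in> NN" "x \<in> carrier G" for n x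
      using Wn[OF f that] ind_act_scale[where sc=mscale and G=G and L=NN and l=n and c=c and f="f x", OF mscale_zero] by simp
  qed
  have Wact: "ind_act G (carrier G) g f \<in> W" if "g \<in> carrier G" "f \<in> W" for g f
  proof (rule WI)
    show "ind_act G (carrier G) g f x = 0" if "x \<notin> carrier G" for x using that by (simp add: ind_act_apply)
    show "ind_act G (carrier G) g f x \<in> U" if "x \<in> carrier G" for x
      using that \<open>g \<in> carrier G\<close> \<open>f \<in> W\<close> WU by (simp add: ind_act_apply)
    show "ind_act G (carrier G) g f (n \<otimes> x) = ind_act G NN n (ind_act G (carrier G) g f x)"
      if "n \<in> NN" "x \<in> carrier G" for n x
    proof -
      have nG: "n \<in> carrier G" using that NN_carr by blast
      have "ind_act G (carrier G) g f (n \<otimes> x) = f (n \<otimes> x \<otimes> g)"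
        using nG that \<open>g \<in> carrier G\<close> by (simp add: ind_act_apply)
      also have "n \<otimes> x \<otimes> g = n \<otimes> (x \<otimes> g)" using nG that \<open>g \<in> carrier G\<close> by (simp add: m_assoc)
      also have "f (n \<otimes> (x \<otimes> g)) = ind_act G NN n (f (x \<otimes> g))"
        using Wn[OF \<open>f \<in> W\<close> that(1)] that \<open>g \<in> carrier G\<close> by simp
      also have "f (x \<otimes> g) = ind_act G (carrier G) g f x" using that by (simp add: ind_act_apply)
      finally show ?thesis .
    qed
  qed
  have Wsum: "(\<And>i. i \<in> I \<Longrightarrow> F i \<in> T) \<Longrightarrow> is_subspace (fscale (fscale mscale)) T \<Longrightarrow> sum F I \<in> T" for F I T
    using sub_sum by blast
  have Wrep: "is_rep (fscale (fscale mscale)) G (ind_act G (carrier G)) W"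
    unfolding is_rep_def is_subspace_def
  proof (intro conjI ballI allI)
    show "0 \<in> W" by (rule W0)
    show "x + y \<in> W" if "x \<in> W" "y \<in> W" for x y using Wadd that by blast
    show "fscale (fscale mscale) c x \<in> W" if "x \<in> W" for c x using Wsc that by blast
    show "ind_act G (carrier G) k v \<in> W" if "k \<in> carrier G" "v \<in> W" for k v using Wact that by blast
    show "ind_act G (carrier G) k (x + y) = ind_act G (carrier G) k x + ind_act G (carrier G) k y"
      for k and x y :: "'g \<Rightarrow> 'g \<Rightarrow> 'e^2^2"
      by (rule ind_act_add)
    show "ind_act G (carrier G) k (fscale (fscale mscale) c x) = fscale (fscale mscale) c (ind_act G (carrier G) k x)" for k c x
      by (rule ind_act_scale) (rule ext, simp)
    show "ind_act G (carrier G) \<one> v = v" if "v \<in> W" for v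
      by (rule ext) (use that Wz in \<open>simp add: ind_act_apply\<close>)
    show "ind_act G (carrier G) (k \<otimes> l) v = ind_act G (carrier G) k (ind_act G (carrier G) l v)"
      if "k \<in> carrier G" "l \<in> carrier G" "v \<in> W" for k l v
      by (rule ext) (use that in \<open>simp add: ind_act_apply m_assoc\<close>)
  qed
  obtain u0 where u0: "u0 \<in> U" "u0 \<noteq> 0" using U_irr U0 unfolding irred_rep_def by blast
  define f0 where "f0 x = (if x \<in> NN then ind_act G NN x u0 else 0)" for x
  have "f0 \<in> W"
  proof (rule WI)
    show "f0 x = 0" if "x \<notin> carrier G" for x using that NN_carr unfolding f0_def by auto
    show "f0 x \<in> U" if "x \<in> carrier G" for x unfolding f0_def using Uact u0 U0 by simp
    show "f0 (n \<otimes> x) = ind_act G NN n (f0 x)" if nx: "n \<in> NN" "x \<in> carrier G" for n x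
    proof (cases "x \<in> NN")
      case True
      thus ?thesis unfolding f0_def using NN_mult nx Umul u0 by simp
    next
      case False
      hence "n \<otimes> x \<notin> NN" using NN_cancel nx by blast
      thus ?thesis unfolding f0_def using False by simp
    qed
  qed
  moreover have "f0 \<noteq> 0"
  proof
    assume "f0 = 0"
    hence "f0 \<one> = 0" by simp
    moreover have "f0 \<one> = u0" unfolding f0_def using one_NN Urep u0 unfolding is_rep_def by simp
    ultimately show False using u0 by simp
  qed
  ultimately have Wne: "W \<noteq> {0}" by blast
  have KD1: "f z y = f (y \<otimes> z) \<one>" if "f \<in> W" "z \<in> carrier G" "y \<in> NN" for f z y
    using Wn[OF that(1) that(3) that(2)] one_NN NN_carr that by (simp add: ind_act_apply)
  have KD2: "f (z \<otimes> h) \<one> = Xr (z \<otimes> h \<otimes> inv z) (f z \<one>)" if f: "f \<in> W" and z: "z \<in> carrier G" and h: "h \<in> H" for f z h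
  proof -
    have hc: "h \<in> carrier G" using H_carr h by blast
    have h': "z \<otimes> h \<otimes> inv z \<in> H" using H_conj z h by blast
    have e: "z \<otimes> h = (z \<otimes> h \<otimes> inv z) \<otimes> z" using z hc by (simp add: m_assoc)
    have "f (z \<otimes> h) = ind_act G NN (z \<otimes> h \<otimes> inv z) (f z)"
      using Wn[OF f H_NN[OF h'] z] by (simp only: e[symmetric])
    hence "f (z \<otimes> h) \<one> = ind_act G NN (z \<otimes> h \<otimes> inv z) (f z) \<one>" by (rule arg_cong)
    also have "\<dots> = f z (z \<otimes> h \<otimes> inv z)" using one_NN h' H_carr by (simp add: ind_act_apply)
    also have "\<dots> = f z ((z \<otimes> h \<otimes> inv z) \<otimes> \<one>)" using h' H_carr by simp
    also have "\<dots> = Xr (z \<otimes> h \<otimes> inv z) (f z \<one>)" using Uh[OF WU[OF f z] h' one_NN] .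
    finally show ?thesis .
  qed
  have irr: "T = {0} \<or> T = W" if inv: "invariant_subspace (fscale (fscale mscale)) G (ind_act G (carrier G)) W T" for T
  proof (cases "T = {0}")
    case True thus ?thesis by blast
  next
    case False
    have TW: "T \<subseteq> W" and Tsub: "is_subspace (fscale (fscale mscale)) T"
      and Tact: "\<And>g f. g \<in> carrier G \<Longrightarrow> f \<in> T \<Longrightarrow> ind_act G (carrier G) g f \<in> T"
      using inv unfolding invariant_subspace_def by auto
    have T0: "0 \<in> T" and Tadd: "\<And>a b. a \<in> T \<Longrightarrow> b \<in> T \<Longrightarrow> a + b \<in> T"
      and Tsc: "\<And>a c. a \<in> T \<Longrightarrow> fscale (fscale mscale) c a \<in> T"
      using Tsub unfolding is_subspace_def by auto
    obtain f where f: "f \<in> T" "f \<noteq> 0" using False T0 by blast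
    have fW: "f \<in> W" using f TW by blast
    obtain x where x: "f x \<noteq> 0" using f(2) by (metis ext zero_fun_apply)
    have xG: "x \<in> carrier G" using x Wz fW by blast
    obtain y where y: "f x y \<noteq> 0" using x by (metis ext zero_fun_apply)
    have yN: "y \<in> NN" using y Uz WU fW xG by blast
    define w where "w = y \<otimes> x"
    have wG: "w \<in> carrier G" unfolding w_def using yN NN_carr xG by simp
    define f1 where "f1 = ind_act G (carrier G) w f"
    have f1T: "f1 \<in> T" unfolding f1_def using Tact wG f by blast
    have f1W: "f1 \<in> W" using f1T TW by blast
    have f1v: "f1 \<one> \<one> = f x y" unfolding f1_def using KD1[OF fW xG yN] wG by (simp add: ind_act_apply w_def)
    define v where "v = f1 \<one> \<one>"
    have vX: "v \<in> Xs" unfolding v_def using Uv WU f1W one_NN by simp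
    have vnz: "v \<noteq> 0" unfolding v_def f1v using y .
    obtain c where cA: "\<And>w u. w \<in> carrier G \<Longrightarrow> w \<notin> NN \<Longrightarrow> u \<in> Xs \<Longrightarrow> (\<Sum>h\<in>H. mscale (c h) (Xr (w \<otimes> h \<otimes> inv w) u)) = 0"
      and cB: "(\<Sum>h\<in>H. mscale (c h) (Xr h v)) \<noteq> 0"
      using separation[OF vX vnz] by blast
    define f2 where "f2 = (\<Sum>h\<in>H. fscale (fscale mscale) (c h) (ind_act G (carrier G) h f1))"
    have f2T: "f2 \<in> T" unfolding f2_def
      by (rule sub_sum[OF Tsub]) (use Tsc Tact f1T H_carr in blast)
    have f2W: "f2 \<in> W" using f2T TW by blast
    have f2val: "f2 x' y' = (\<Sum>h\<in>H. mscale (c h) (Xr ((y' \<otimes> x') \<otimes> h \<otimes> inv (y' \<otimes> x')) (f1 (y' \<otimes> x') \<one>)))"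
      if x': "x' \<in> carrier G" and y': "y' \<in> NN" for x' y'
    proof -
      have "f2 x' y' = (\<Sum>h\<in>H. mscale (c h) (f1 (x' \<otimes> h) y'))"
        unfolding f2_def sum_fun_apply using x' by (simp add: ind_act_apply)
      also have "\<dots> = (\<Sum>h\<in>H. mscale (c h) (Xr ((y' \<otimes> x') \<otimes> h \<otimes> inv (y' \<otimes> x')) (f1 (y' \<otimes> x') \<one>)))"
      proof (rule sum.cong[OF refl])
        fix h assume h: "h \<in> H"
        have hc: "h \<in> carrier G" using h H_carr by blast
        have yc: "y' \<in> carrier G" using y' NN_carr by blast
        have "f1 (x' \<otimes> h) y' = f1 (y' \<otimes> (x' \<otimes> h)) \<one>" using KD1[OF f1W _ y'] x' hc by simp
        also have "y' \<otimes> (x' \<otimes> h) = (y' \<otimes> x') \<otimes> h" using yc x' hc by (simp add: m_assoc)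
        also have "f1 ((y' \<otimes> x') \<otimes> h) \<one> = Xr ((y' \<otimes> x') \<otimes> h \<otimes> inv (y' \<otimes> x')) (f1 (y' \<otimes> x') \<one>)"
          using KD2[OF f1W _ h] yc x' by simp
        finally show "mscale (c h) (f1 (x' \<otimes> h) y') = mscale (c h) (Xr ((y' \<otimes> x') \<otimes> h \<otimes> inv (y' \<otimes> x')) (f1 (y' \<otimes> x') \<one>))"
          by simp
      qed
      finally show ?thesis .
    qed
    have f2supp: "f2 x' = 0" if x': "x' \<notin> NN" for x'
    proof (cases "x' \<in> carrier G")
      case False thus ?thesis using Wz f2W by blast
    next
      case True
      show ?thesis
      proof (rule ext)
        fix y'
        show "f2 x' y' = 0 y'"
        proof (cases "y' \<in> NN")
          case False
          thus ?thesis using Uz WU f2W True by simp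
        next
          case yN': True
          have wG': "y' \<otimes> x' \<in> carrier G" using yN' NN_carr \<open>x' \<in> carrier G\<close> by simp
          have "y' \<otimes> x' \<notin> NN" using NN_cancel yN' \<open>x' \<in> carrier G\<close> x' by blast
          moreover have "f1 (y' \<otimes> x') \<one> \<in> Xs" using Uv WU f1W wG' one_NN by simp
          ultimately show ?thesis using f2val[OF True yN'] cA wG' by simp
        qed
      qed
    qed
    have f2one: "f2 \<one> \<one> \<noteq> 0"
    proof -
      have "f2 \<one> \<one> = (\<Sum>h\<in>H. mscale (c h) (Xr h v))"
        using f2val[OF one_closed one_NN] H_carr unfolding v_def by simp
      thus ?thesis using cB by simp
    qed
    define U2 where "U2 = {g \<one> | g. g \<in> T \<and> (\<forall>x. x \<notin> NN \<longrightarrow> g x = 0)}"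
    have "invariant_subspace (fscale mscale) (G\<lparr>carrier := NN\<rparr>) (ind_act G NN) U U2"
      unfolding invariant_subspace_def is_subspace_def
    proof (intro conjI ballI allI)
      show "U2 \<subseteq> U" unfolding U2_def using TW WU by blast
      show "0 \<in> U2" unfolding U2_def using T0 by force
      show "a + b \<in> U2" if ab: "a \<in> U2" "b \<in> U2" for a b
      proof -
        obtain g1 where g1: "g1 \<in> T" "\<forall>x. x \<notin> NN \<longrightarrow> g1 x = 0" "a = g1 \<one>" using ab(1) unfolding U2_def by blast
        obtain g2 where g2: "g2 \<in> T" "\<forall>x. x \<notin> NN \<longrightarrow> g2 x = 0" "b = g2 \<one>" using ab(2) unfolding U2_def by blast
        have "g1 + g2 \<in> T" using Tadd g1 g2 by blast
        moreover have "\<forall>x. x \<notin> NN \<longrightarrow> (g1 + g2) x = 0" using g1 g2 by simp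
        moreover have "a + b = (g1 + g2) \<one>" using g1 g2 by simp
        ultimately show ?thesis unfolding U2_def by blast
      qed
      show "fscale mscale c a \<in> U2" if a: "a \<in> U2" for c a
      proof -
        obtain g1 where g1: "g1 \<in> T" "\<forall>x. x \<notin> NN \<longrightarrow> g1 x = 0" "a = g1 \<one>" using a unfolding U2_def by blast
        have "fscale (fscale mscale) c g1 \<in> T" using Tsc g1 by blast
        moreover have "\<forall>x. x \<notin> NN \<longrightarrow> fscale (fscale mscale) c g1 x = 0" using g1 by simp
        moreover have "fscale mscale c a = fscale (fscale mscale) c g1 \<one>" using g1 by simp
        ultimately show ?thesis unfolding U2_def by blast
      qed
      show "ind_act G NN n a \<in> U2" if n: "n \<in> carrier (G\<lparr>carrier := NN\<rparr>)" and a: "a \<in> U2" for n a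
      proof -
        have nN: "n \<in> NN" using n by simp
        have nG: "n \<in> carrier G" using nN NN_carr by blast
        obtain g1 where g1: "g1 \<in> T" "\<forall>x. x \<notin> NN \<longrightarrow> g1 x = 0" "a = g1 \<one>" using a unfolding U2_def by blast
        have g1W: "g1 \<in> W" using g1 TW by blast
        define g' where "g' = ind_act G (carrier G) n g1"
        have "g' \<in> T" unfolding g'_def using Tact nG g1 by blast
        moreover have "\<forall>x. x \<notin> NN \<longrightarrow> g' x = 0"
        proof (intro allI impI)
          fix x assume xN: "x \<notin> NN"
          show "g' x = 0"
          proof (cases "x \<in> carrier G")
            case True
            hence "x \<otimes> n \<notin> NN" using NN_cancel_r nN xN by blast
            thus ?thesis unfolding g'_def using g1 True by (simp add: ind_act_apply)
          qed (simp add: g'_def ind_act_apply)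
        qed
        moreover have "ind_act G NN n a = g' \<one>"
        proof -
          have "ind_act G NN n a = g1 (n \<otimes> \<one>)" using Wn[OF g1W nN one_closed] g1(3) by simp
          also have "\<dots> = g' \<one>" unfolding g'_def using nG by (simp add: ind_act_apply)
          finally show ?thesis .
        qed
        ultimately show ?thesis unfolding U2_def by blast
      qed
    qed
    moreover have "U2 \<noteq> {0}"
    proof -
      have "f2 \<one> \<in> U2" unfolding U2_def using f2T f2supp by blast
      moreover have "f2 \<one> \<noteq> 0" using f2one by (metis zero_fun_apply)
      ultimately show ?thesis by blast
    qed
    ultimately have U2U: "U2 = U" using U_irr unfolding irred_rep_def by blast
    have "fW \<in> T" if fWW: "fW \<in> W" for fW
    proof -
      have ex: "\<exists>g. g \<in> T \<and> (\<forall>x. x \<notin> NN \<longrightarrow> g x = 0) \<and> g \<one> = fW x" if xG: "x \<in> carrier G" for x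
      proof -
        have "fW x \<in> U2" using U2U WU fWW xG by blast
        thus ?thesis unfolding U2_def mem_Collect_eq by metis
      qed
      define g where "g x = (SOME g. g \<in> T \<and> (\<forall>x. x \<notin> NN \<longrightarrow> g x = 0) \<and> g \<one> = fW x)" for x
      have g: "g x \<in> T" "\<forall>z. z \<notin> NN \<longrightarrow> g x z = 0" "g x \<one> = fW x" if "x \<in> carrier G" for x
        using someI_ex[OF ex[OF that]] unfolding g_def by blast+
      define F where "F x = ind_act G (carrier G) (inv x) (g x)" for x
      have FT: "F x \<in> T" if "x \<in> carrier G" for x unfolding F_def using Tact g that by simp
      define S where "S = (\<Sum>x\<in>carrier G. F x)"
      have ST: "S \<in> T" unfolding S_def by (rule sub_sum[OF Tsub]) (rule FT)
      have Fval: "F x z = (if z \<otimes> inv x \<in> NN then fW z else 0)" if xG: "x \<in> carrier G" and zG: "z \<in> carrier G" for x z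
      proof (cases "z \<otimes> inv x \<in> NN")
        case True
        have gW: "g x \<in> W" using g(1)[OF xG] TW by blast
        have "F x z = g x ((z \<otimes> inv x) \<otimes> \<one>)" unfolding F_def using xG zG by (simp add: ind_act_apply)
        also have "\<dots> = ind_act G NN (z \<otimes> inv x) (fW x)" using Wn[OF gW True one_closed] g(3)[OF xG] by simp
        also have "\<dots> = fW ((z \<otimes> inv x) \<otimes> x)" using Wn[OF fWW True xG] by simp
        also have "(z \<otimes> inv x) \<otimes> x = z" using xG zG by (simp add: m_assoc)
        finally show ?thesis using True by simp
      next
        case False
        thus ?thesis unfolding F_def using xG zG g(2)[OF xG] by (simp add: ind_act_apply)
      qed
      define m where "m = card NN"
      have m0: "(of_nat m :: 'e) \<noteq> 0" unfolding m_def using NN_fin one_NN by auto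
      have cardS: "card {x \<in> carrier G. z \<otimes> inv x \<in> NN} = m" if zG: "z \<in> carrier G" for z
      proof -
        have "bij_betw (\<lambda>x. z \<otimes> inv x) {x \<in> carrier G. z \<otimes> inv x \<in> NN} NN"
        proof (rule bij_betwI[of _ _ _ "\<lambda>n. inv n \<otimes> z"])
          show "(\<lambda>x. z \<otimes> inv x) \<in> {x \<in> carrier G. z \<otimes> inv x \<in> NN} \<rightarrow> NN" by blast
          show "(\<lambda>n. inv n \<otimes> z) \<in> NN \<rightarrow> {x \<in> carrier G. z \<otimes> inv x \<in> NN}"
          proof
            fix n assume n: "n \<in> NN"
            have nc: "n \<in> carrier G" using n NN_carr by blast
            have "z \<otimes> inv (inv n \<otimes> z) = n" using nc zG by (simp add: inv_mult_group m_assoc[symmetric])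
            thus "inv n \<otimes> z \<in> {x \<in> carrier G. z \<otimes> inv x \<in> NN}" using n nc zG by simp
          qed
          show "inv (z \<otimes> inv x) \<otimes> z = x" if "x \<in> {x \<in> carrier G. z \<otimes> inv x \<in> NN}" for x
            using that zG by (simp add: inv_mult_group m_assoc)
          show "z \<otimes> inv (inv n \<otimes> z) = n" if "n \<in> NN" for n
            using that NN_carr zG by (simp add: inv_mult_group m_assoc[symmetric])
        qed
        thus ?thesis unfolding m_def by (rule bij_betw_same_card)
      qed
      have "fscale (fscale mscale) (1 / of_nat m) S = fW"
      proof (rule ext, rule ext)
        fix z y
        show "fscale (fscale mscale) (1 / of_nat m) S z y = fW z y"
        proof (cases "z \<in> carrier G")
          case False
          have "S z = 0" unfolding S_def sum_fun_apply F_def using False by (simp add: ind_act_apply)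
          thus ?thesis using Wz[OF fWW False] by simp
        next
          case zG: True
          have "S z y = (\<Sum>x\<in>carrier G. F x z y)" unfolding S_def sum_fun_apply by (rule refl)
          also have "\<dots> = (\<Sum>x\<in>carrier G. (if z \<otimes> inv x \<in> NN then fW z y else 0))"
          proof (rule sum.cong[OF refl])
            fix x assume xG: "x \<in> carrier G"
            show "F x z y = (if z \<otimes> inv x \<in> NN then fW z y else 0)"
              by (cases "z \<otimes> inv x \<in> NN") (simp_all add: Fval[OF xG zG])
          qed
          also have "\<dots> = (\<Sum>x\<in>{x \<in> carrier G. z \<otimes> inv x \<in> NN}. fW z y)"
            by (rule sum.inter_filter[OF G_fin, symmetric])
          finally have Se: "S z y = of_nat m * fW z y" using cardS[OF zG] by simp
          show ?thesis unfolding fscale_apply Se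
            using m0 by (simp add: vec_eq_iff of_nat_index)
        qed
      qed
      moreover have "fscale (fscale mscale) (1 / of_nat m) S \<in> T" using Tsc ST by blast
      ultimately show ?thesis by simp
    qed
    hence "T = W" using TW by blast
    thus ?thesis by blast
  qed
  show ?thesis unfolding irred_rep_def W_def[symmetric] using Wrep Wne irr by blast
qed

end



context L47 begin

lemma part2:
  assumes V_sub: "V' \<subseteq> ind_space G H (carrier G) Xr Xs"
    and V_irr: "irred_rep (fscale mscale) G (ind_act G (carrier G)) V'"
  shows "\<exists>U. U \<subseteq> ind_space G H NN Xr Xs
             \<and> irred_rep (fscale mscale) (G\<lparr>carrier := NN\<rparr>) (ind_act G NN) U
             \<and> rep_iso (fscale mscale) (fscale (fscale mscale)) G (ind_act G (carrier G)) V'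
                  (ind_act G (carrier G)) (ind_space G NN (carrier G) (ind_act G NN) U)"
proof -
  have Vrep: "is_rep (fscale mscale) G (ind_act G (carrier G)) V'"
    using V_irr unfolding irred_rep_def by blast
  have Vsub: "is_subspace (fscale mscale) V'" using Vrep unfolding is_rep_def by blast
  have V0: "0 \<in> V'" using Vsub unfolding is_subspace_def by blast
  have Vadd: "a \<in> V' \<Longrightarrow> b \<in> V' \<Longrightarrow> a + b \<in> V'" for a b using Vsub unfolding is_subspace_def by blast
  have Vsc: "a \<in> V' \<Longrightarrow> fscale mscale c a \<in> V'" for a c using Vsub unfolding is_subspace_def by blast
  have Vact: "g \<in> carrier G \<Longrightarrow> a \<in> V' \<Longrightarrow> ind_act G (carrier G) g a \<in> V'" for g a
    using Vrep unfolding is_rep_def by blast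
  have Vmul: "k \<in> carrier G \<Longrightarrow> l \<in> carrier G \<Longrightarrow> a \<in> V' \<Longrightarrow>
      ind_act G (carrier G) (k \<otimes> l) a = ind_act G (carrier G) k (ind_act G (carrier G) l a)" for k l a
    using Vrep unfolding is_rep_def by blast
  have Vz: "a \<in> V' \<Longrightarrow> x \<notin> carrier G \<Longrightarrow> a x = 0" for a x using V_sub unfolding ind_space_def by blast
  have Vv: "a \<in> V' \<Longrightarrow> x \<in> carrier G \<Longrightarrow> a x \<in> Xs" for a x using V_sub unfolding ind_space_def by blast
  have Vh: "a \<in> V' \<Longrightarrow> h \<in> H \<Longrightarrow> x \<in> carrier G \<Longrightarrow> a (h \<otimes> x) = Xr h (a x)" for a h x
    using V_sub unfolding ind_space_def by blast
  have Vsum: "(\<And>i. i \<in> I \<Longrightarrow> F i \<in> V') \<Longrightarrow> sum F I \<in> V'" for F I using sub_sum[OF Vsub] by blast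
  define uN where "uN a = (\<lambda>y. if y \<in> NN then a y else 0)" for a :: "'g \<Rightarrow> 'e^2^2"
  define U where "U = uN ` V'"
  have uN_act: "ind_act G NN n (uN a) = uN (ind_act G (carrier G) n a)" if n: "n \<in> NN" for n a
  proof (rule ext)
    fix y show "ind_act G NN n (uN a) y = uN (ind_act G (carrier G) n a) y"
      using NN_mult[OF _ n] NN_carr by (simp add: uN_def ind_act_apply)
  qed
  have uN_add: "uN (a + b) = uN a + uN b" for a b by (rule ext) (simp add: uN_def)
  have uN_sc: "uN (fscale mscale c a) = fscale mscale c (uN a)" for a c by (rule ext) (simp add: uN_def)
  have uN_sum: "uN (\<Sum>i\<in>I. F i) = (\<Sum>i\<in>I. uN (F i))" for F I
    by (rule ext) (simp add: uN_def sum_fun_apply)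
  have uN_z: "uN a x = 0" if "x \<notin> NN" for a x using that by (simp add: uN_def)
  have Uind: "U \<subseteq> ind_space G H NN Xr Xs"
  proof
    fix u assume "u \<in> U"
    then obtain a where a: "a \<in> V'" "u = uN a" unfolding U_def by blast
    show "u \<in> ind_space G H NN Xr Xs" unfolding ind_space_def
    proof (intro CollectI conjI allI ballI impI)
      show "u x = 0" if "x \<notin> NN" for x using a that by (simp add: uN_def)
      show "u x \<in> Xs" if "x \<in> NN" for x using a that Vv NN_carr by (simp add: uN_def)
      show "u (h \<otimes> x) = Xr h (u x)" if "h \<in> H" "x \<in> NN" for h x
        using a that Vh NN_carr H_NN NN_mult by (simp add: uN_def)
    qed
  qed
  have Urep: "is_rep (fscale mscale) (G\<lparr>carrier := NN\<rparr>) (ind_act G NN) U"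
    unfolding is_rep_def is_subspace_def
  proof (intro conjI ballI allI)
    have "uN 0 = 0" by (rule ext) (simp add: uN_def)
    thus "0 \<in> U" unfolding U_def using V0 by (metis image_eqI)
    show "x + y \<in> U" if xy: "x \<in> U" "y \<in> U" for x y
    proof -
      obtain a where a: "a \<in> V'" "x = uN a" using xy(1) unfolding U_def by blast
      obtain b where b: "b \<in> V'" "y = uN b" using xy(2) unfolding U_def by blast
      have "x + y = uN (a + b)" using a b uN_add by simp
      thus ?thesis unfolding U_def using Vadd[OF a(1) b(1)] by (metis image_eqI)
    qed
    show "fscale mscale c x \<in> U" if x: "x \<in> U" for c x
    proof -
      obtain a where a: "a \<in> V'" "x = uN a" using x unfolding U_def by blast
      have "fscale mscale c x = uN (fscale mscale c a)" using a uN_sc by simp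
      thus ?thesis unfolding U_def using Vsc[OF a(1)] by (metis image_eqI)
    qed
    show "ind_act G NN k v \<in> U" if kv: "k \<in> carrier (G\<lparr>carrier := NN\<rparr>)" "v \<in> U" for k v
    proof -
      have k: "k \<in> NN" using kv by simp
      obtain a where a: "a \<in> V'" "v = uN a" using kv(2) unfolding U_def by blast
      have "ind_act G NN k v = uN (ind_act G (carrier G) k a)" using a uN_act[OF k] by simp
      thus ?thesis unfolding U_def using Vact[OF NN_carr[OF k] a(1)] by (metis image_eqI)
    qed
    show "ind_act G NN k (x + y) = ind_act G NN k x + ind_act G NN k y"
      for k and x y :: "'g \<Rightarrow> 'e^2^2" by (rule ind_act_add)
    show "ind_act G NN k (fscale mscale c x) = fscale mscale c (ind_act G NN k x)" for k c x
      by (rule ind_act_scale) simp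
    show "ind_act G NN \<one>\<^bsub>G\<lparr>carrier := NN\<rparr>\<^esub> v = v" if vU: "v \<in> U" for v
    proof (rule ext)
      fix x
      obtain a where "v = uN a" using vU unfolding U_def by blast
      thus "ind_act G NN \<one>\<^bsub>G\<lparr>carrier := NN\<rparr>\<^esub> v x = v x"
        using NN_carr by (simp add: ind_act_apply uN_def)
    qed
    show "ind_act G NN (k \<otimes>\<^bsub>G\<lparr>carrier := NN\<rparr>\<^esub> l) v = ind_act G NN k (ind_act G NN l v)"
      if kl: "k \<in> carrier (G\<lparr>carrier := NN\<rparr>)" "l \<in> carrier (G\<lparr>carrier := NN\<rparr>)" "v \<in> U" for k l v
    proof (rule ext)
      fix x
      have k: "k \<in> NN" and l: "l \<in> NN" using kl by auto
      show "ind_act G NN (k \<otimes>\<^bsub>G\<lparr>carrier := NN\<rparr>\<^esub> l) v x = ind_act G NN k (ind_act G NN l v) x"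
        using k l NN_carr NN_mult by (simp add: ind_act_apply m_assoc)
    qed
  qed
  have shift: "\<exists>b\<in>V'. b \<one> \<noteq> 0" if a: "a \<in> V'" "a \<noteq> 0" for a
  proof -
    obtain x where x: "a x \<noteq> 0" using a(2) by (metis ext zero_fun_apply)
    have xG: "x \<in> carrier G" using x Vz a(1) by blast
    have "ind_act G (carrier G) x a \<one> = a x" using xG by (simp add: ind_act_apply)
    thus ?thesis using Vact[OF xG a(1)] x by metis
  qed
  obtain a0 where a0: "a0 \<in> V'" "a0 \<noteq> 0" using V_irr V0 unfolding irred_rep_def by blast
  obtain b0 where b0: "b0 \<in> V'" "b0 \<one> \<noteq> 0" using shift[OF a0] by blast
  have Une: "U \<noteq> {0}"
  proof -
    have "uN b0 \<in> U" unfolding U_def using b0 by blast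
    moreover have "uN b0 \<one> \<noteq> 0" using b0 one_NN by (simp add: uN_def)
    ultimately show ?thesis by (metis singletonD zero_fun_apply)
  qed
  have Uirr: "T = {0} \<or> T = U" if inv: "invariant_subspace (fscale mscale) (G\<lparr>carrier := NN\<rparr>) (ind_act G NN) U T" for T
  proof (cases "T = {0}")
    case True thus ?thesis by blast
  next
    case False
    have TU: "T \<subseteq> U" and Tsub: "is_subspace (fscale mscale) T"
      and Tact: "\<And>n u. n \<in> NN \<Longrightarrow> u \<in> T \<Longrightarrow> ind_act G NN n u \<in> T"
      using inv unfolding invariant_subspace_def by auto
    have T0: "0 \<in> T" and Tadd: "\<And>a b. a \<in> T \<Longrightarrow> b \<in> T \<Longrightarrow> a + b \<in> T"
      and Tsc: "\<And>a c. a \<in> T \<Longrightarrow> fscale mscale c a \<in> T"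
      using Tsub unfolding is_subspace_def by auto
    obtain u where u: "u \<in> T" "u \<noteq> 0" using False T0 by blast
    obtain a where a: "a \<in> V'" "u = uN a" using u TU unfolding U_def by blast
    obtain y where y: "u y \<noteq> 0" using u(2) by (metis ext zero_fun_apply)
    have yN: "y \<in> NN" using y a uN_z by metis
    have yG: "y \<in> carrier G" using yN NN_carr by blast
    define a1 where "a1 = ind_act G (carrier G) y a"
    have a1V: "a1 \<in> V'" unfolding a1_def using Vact yG a by blast
    have ua1: "uN a1 \<in> T" unfolding a1_def using uN_act[OF yN] Tact[OF yN u(1)] a(2) by simp
    have a1one: "a1 \<one> = u y" unfolding a1_def using a yN yG by (simp add: ind_act_apply uN_def)
    define v where "v = a1 \<one>"
    have vX: "v \<in> Xs" unfolding v_def using Vv a1V by simp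
    have vnz: "v \<noteq> 0" unfolding v_def a1one by (rule y)
    obtain c where cA: "\<And>w u. w \<in> carrier G \<Longrightarrow> w \<notin> NN \<Longrightarrow> u \<in> Xs \<Longrightarrow> (\<Sum>h\<in>H. mscale (c h) (Xr (w \<otimes> h \<otimes> inv w) u)) = 0"
      and cB: "(\<Sum>h\<in>H. mscale (c h) (Xr h v)) \<noteq> 0"
      using separation[OF vX vnz] by blast
    define a2 where "a2 = (\<Sum>h\<in>H. fscale mscale (c h) (ind_act G (carrier G) h a1))"
    have a2V: "a2 \<in> V'" unfolding a2_def
      by (rule Vsum) (use Vsc Vact a1V H_carr in blast)
    have a2val: "a2 z = (\<Sum>h\<in>H. mscale (c h) (Xr (z \<otimes> h \<otimes> inv z) (a1 z)))" if zG: "z \<in> carrier G" for z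
    proof -
      have "a2 z = (\<Sum>h\<in>H. mscale (c h) (a1 (z \<otimes> h)))"
        unfolding a2_def sum_fun_apply using zG by (simp add: ind_act_apply)
      also have "\<dots> = (\<Sum>h\<in>H. mscale (c h) (Xr (z \<otimes> h \<otimes> inv z) (a1 z)))"
      proof (rule sum.cong[OF refl])
        fix h assume h: "h \<in> H"
        have hc: "h \<in> carrier G" using h H_carr by blast
        have h': "z \<otimes> h \<otimes> inv z \<in> H" using H_conj zG h by blast
        have e: "(z \<otimes> h \<otimes> inv z) \<otimes> z = z \<otimes> h" using zG hc by (simp add: m_assoc)
        have "a1 (z \<otimes> h) = Xr (z \<otimes> h \<otimes> inv z) (a1 z)"
          using Vh[OF a1V h' zG] by (simp only: e)
        thus "mscale (c h) (a1 (z \<otimes> h)) = mscale (c h) (Xr (z \<otimes> h \<otimes> inv z) (a1 z))" by simp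
      qed
      finally show ?thesis .
    qed
    have a2supp: "a2 z = 0" if z: "z \<notin> NN" for z
    proof (cases "z \<in> carrier G")
      case False thus ?thesis using Vz a2V by blast
    next
      case True
      thus ?thesis using a2val[OF True] cA[OF True z] Vv[OF a1V True] by simp
    qed
    have a2one: "a2 \<one> \<noteq> 0"
      using a2val[OF one_closed] cB H_carr unfolding v_def by simp
    have ua2: "uN a2 \<in> T"
    proof -
      have "uN a2 = (\<Sum>h\<in>H. fscale mscale (c h) (ind_act G NN h (uN a1)))"
        unfolding a2_def uN_sum uN_sc uN_act[OF H_NN] by (rule sum.cong[OF refl]) (simp add: uN_act H_NN)
      also have "\<dots> \<in> T" by (rule sub_sum[OF Tsub]) (use Tsc Tact ua1 H_NN in blast)
      finally show ?thesis .
    qed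
    define V2 where "V2 = {b \<in> V'. \<forall>x\<in>carrier G. uN (ind_act G (carrier G) x b) \<in> T}"
    have "invariant_subspace (fscale mscale) G (ind_act G (carrier G)) V' V2"
      unfolding invariant_subspace_def is_subspace_def
    proof (intro conjI ballI allI)
      show "V2 \<subseteq> V'" unfolding V2_def by blast
      have z0: "uN (ind_act G (carrier G) x 0) = 0" for x by (rule ext) (simp add: uN_def ind_act_def)
      show "0 \<in> V2" unfolding V2_def using V0 T0 z0 by simp
      show "b + b' \<in> V2" if "b \<in> V2" "b' \<in> V2" for b b'
        using that Vadd Tadd unfolding V2_def by (simp add: ind_act_add uN_add)
      show "fscale mscale c b \<in> V2" if "b \<in> V2" for c b
        using that Vsc Tsc unfolding V2_def by (simp add: ind_act_scale uN_sc)
      show "ind_act G (carrier G) g b \<in> V2" if g: "g \<in> carrier G" and b: "b \<in> V2" for g b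
      proof -
        have bV: "b \<in> V'" using b unfolding V2_def by blast
        have "uN (ind_act G (carrier G) x (ind_act G (carrier G) g b)) \<in> T" if x: "x \<in> carrier G" for x
        proof -
          have "uN (ind_act G (carrier G) (x \<otimes> g) b) \<in> T" using b x g unfolding V2_def by simp
          thus ?thesis using Vmul[OF x g bV] by simp
        qed
        thus ?thesis unfolding V2_def using Vact g bV by blast
      qed
    qed
    moreover have "a2 \<in> V2"
    proof -
      have "uN (ind_act G (carrier G) x a2) \<in> T" if x: "x \<in> carrier G" for x
      proof (cases "x \<in> NN")
        case True
        thus ?thesis using uN_act[OF True, of a2] Tact[OF True ua2] by simp
      next
        case False
        have "uN (ind_act G (carrier G) x a2) = 0"
        proof (rule ext)
          fix y show "uN (ind_act G (carrier G) x a2) y = 0 y"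
          proof (cases "y \<in> NN")
            case True
            hence "y \<otimes> x \<notin> NN" using NN_cancel x False by blast
            thus ?thesis using True NN_carr a2supp by (simp add: uN_def ind_act_apply)
          qed (simp add: uN_def)
        qed
        thus ?thesis using T0 by simp
      qed
      thus ?thesis unfolding V2_def using a2V by blast
    qed
    moreover have "a2 \<noteq> 0" using a2one by (metis zero_fun_apply)
    ultimately have "V2 = V'" using V_irr unfolding irred_rep_def by blast
    hence "U \<subseteq> T"
    proof -
      assume V2V: "V2 = V'"
      show ?thesis
      proof
        fix w assume "w \<in> U"
        then obtain b where b: "b \<in> V'" "w = uN b" unfolding U_def by blast
        have "uN (ind_act G (carrier G) \<one> b) \<in> T" using b V2V unfolding V2_def by blast
        moreover have "ind_act G (carrier G) \<one> b = b" using Vrep b unfolding is_rep_def by simp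
        ultimately show "w \<in> T" using b by simp
      qed
    qed
    thus ?thesis using TU by blast
  qed
  have Uirred: "irred_rep (fscale mscale) (G\<lparr>carrier := NN\<rparr>) (ind_act G NN) U"
    unfolding irred_rep_def using Urep Une Uirr by blast
  define W where "W = ind_space G NN (carrier G) (ind_act G NN) U"
  have Wirr: "irred_rep (fscale (fscale mscale)) G (ind_act G (carrier G)) W"
    unfolding W_def by (rule part1[OF Uind Uirred])
  define Tm where "Tm a = (\<lambda>x. if x \<in> carrier G then uN (ind_act G (carrier G) x a) else 0)" for a
  have TmW: "Tm a \<in> W" if a: "a \<in> V'" for a
    unfolding W_def ind_space_def
  proof (intro CollectI conjI allI ballI impI)
    show "Tm a x = 0" if "x \<notin> carrier G" for x using that by (simp add: Tm_def)
    show "Tm a x \<in> U" if "x \<in> carrier G" for x using that a Vact unfolding Tm_def U_def by simp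
    show "Tm a (n \<otimes> x) = ind_act G NN n (Tm a x)" if "n \<in> NN" "x \<in> carrier G" for n x
    proof -
      have nG: "n \<in> carrier G" using that NN_carr by blast
      have "Tm a (n \<otimes> x) = uN (ind_act G (carrier G) n (ind_act G (carrier G) x a))"
        unfolding Tm_def using nG that Vmul[OF nG _ a] by simp
      also have "\<dots> = ind_act G NN n (uN (ind_act G (carrier G) x a))" using uN_act[OF that(1)] by simp
      finally show ?thesis unfolding Tm_def using that by simp
    qed
  qed
  have uN_ind0: "uN (ind_act G (carrier G) x 0) = 0" for x by (rule ext) (simp add: uN_def ind_act_def)
  have uN0: "uN 0 = 0" by (rule ext) (simp add: uN_def)
  have Tm0: "Tm 0 = 0" by (rule ext) (simp add: Tm_def uN_ind0 uN0)
  have Tm_add: "Tm (a + b) = Tm a + Tm b" for a b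
    by (rule ext) (simp add: Tm_def ind_act_add uN_add)
  have Tm_sc: "Tm (fscale mscale c a) = fscale (fscale mscale) c (Tm a)" for a c
    by (rule ext) (simp add: Tm_def ind_act_scale uN_sc)
  have Tm_eq: "Tm (ind_act G (carrier G) g a) = ind_act G (carrier G) g (Tm a)" if g: "g \<in> carrier G" and a: "a \<in> V'" for g a
  proof (rule ext)
    fix x show "Tm (ind_act G (carrier G) g a) x = ind_act G (carrier G) g (Tm a) x"
      unfolding Tm_def using g Vmul[OF _ g a] by (simp add: ind_act_apply)
  qed
  have inj: "inj_on Tm V'"
  proof -
    define K where "K = {a \<in> V'. Tm a = 0}"
    have "invariant_subspace (fscale mscale) G (ind_act G (carrier G)) V' K"
      unfolding invariant_subspace_def is_subspace_def K_def
    proof (intro conjI ballI allI)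
      show "{a \<in> V'. Tm a = 0} \<subseteq> V'" by blast
      show "0 \<in> {a \<in> V'. Tm a = 0}" using V0 Tm0 by simp
      show "x + y \<in> {a \<in> V'. Tm a = 0}" if "x \<in> {a \<in> V'. Tm a = 0}" "y \<in> {a \<in> V'. Tm a = 0}" for x y
        using that Vadd Tm_add by simp
      show "fscale mscale c x \<in> {a \<in> V'. Tm a = 0}" if "x \<in> {a \<in> V'. Tm a = 0}" for c x
        using that Vsc Tm_sc by (simp add: fscale_def)
      show "ind_act G (carrier G) k v \<in> {a \<in> V'. Tm a = 0}" if "k \<in> carrier G" "v \<in> {a \<in> V'. Tm a = 0}" for k v
        using that Vact Tm_eq by simp
    qed
    moreover have "K \<noteq> V'"
    proof -
      have "Tm b0 \<one> \<one> = b0 \<one>" unfolding Tm_def using Vrep b0 one_NN unfolding is_rep_def by (simp add: uN_def)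
      hence "Tm b0 \<noteq> 0" using b0 by (metis zero_fun_apply)
      thus ?thesis unfolding K_def using b0 by blast
    qed
    ultimately have K0: "K = {0}" using V_irr unfolding irred_rep_def by blast
    show ?thesis
    proof (rule inj_onI)
      fix a b assume ab: "a \<in> V'" "b \<in> V'" "Tm a = Tm b"
      have mb: "fscale mscale (-1) b = - b" by (rule ext) (simp add: mscale_def vec_eq_iff)
      have "a + fscale mscale (-1) b \<in> V'" using ab Vadd Vsc by blast
      moreover have "Tm (a + fscale mscale (-1) b) = 0"
      proof -
        have "Tm (a + fscale mscale (-1) b) = Tm a + fscale (fscale mscale) (-1) (Tm a)"
          unfolding Tm_add Tm_sc ab(3) by (rule refl)
        also have "\<dots> = 0" by (rule ext, rule ext) (simp add: mscale_def vec_eq_iff)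
        finally show ?thesis .
      qed
      ultimately have "a + fscale mscale (-1) b \<in> K" unfolding K_def by blast
      hence "a + fscale mscale (-1) b = 0" using K0 by blast
      thus "a = b" unfolding mb by simp
    qed
  qed
  have surj: "Tm ` V' = W"
  proof -
    have "invariant_subspace (fscale (fscale mscale)) G (ind_act G (carrier G)) W (Tm ` V')"
      unfolding invariant_subspace_def is_subspace_def
    proof (intro conjI ballI allI)
      show "Tm ` V' \<subseteq> W" using TmW by blast
      show "0 \<in> Tm ` V'"
      proof -
        have "Tm 0 = 0" by (rule Tm0)
        thus ?thesis using V0 by (metis image_eqI)
      qed
      show "x + y \<in> Tm ` V'" if "x \<in> Tm ` V'" "y \<in> Tm ` V'" for x y
        using that Vadd Tm_add by (metis (no_types, lifting) image_iff)
      show "fscale (fscale mscale) c x \<in> Tm ` V'" if "x \<in> Tm ` V'" for c x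
        using that Vsc Tm_sc by (metis (no_types, lifting) image_iff)
      show "ind_act G (carrier G) k v \<in> Tm ` V'" if "k \<in> carrier G" "v \<in> Tm ` V'" for k v
        using that Vact Tm_eq by (metis (no_types, lifting) image_iff)
    qed
    moreover have "Tm ` V' \<noteq> {0}"
    proof -
      have "Tm b0 \<one> \<one> = b0 \<one>" unfolding Tm_def using Vrep b0 one_NN unfolding is_rep_def by (simp add: uN_def)
      hence "Tm b0 \<noteq> 0" using b0 by (metis zero_fun_apply)
      thus ?thesis using b0 by blast
    qed
    ultimately show ?thesis using Wirr unfolding irred_rep_def by blast
  qed
  have "rep_iso (fscale mscale) (fscale (fscale mscale)) G (ind_act G (carrier G)) V' (ind_act G (carrier G)) W"
    unfolding rep_iso_def
  proof (rule exI[of _ Tm], intro conjI ballI allI)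
    show "bij_betw Tm V' W" unfolding bij_betw_def using inj surj by blast
    show "Tm (x + y) = Tm x + Tm y" for x y by (rule Tm_add)
    show "Tm (fscale mscale c x) = fscale (fscale mscale) c (Tm x)" for c x by (rule Tm_sc)
    show "Tm (ind_act G (carrier G) k x) = ind_act G (carrier G) k (Tm x)" if "k \<in> carrier G" "x \<in> V'" for k x
      using Tm_eq that by blast
  qed
  thus ?thesis using Uind Uirred unfolding W_def by blast
qed

end


theorem lemma4p7:
  fixes G :: "'g monoid"
    and H :: "'g set"
    and \<Gamma> :: "('e::field_char_0^2^2) set set"
    and Xs :: "('e^2^2) set"
    and \<pi> :: "'g \<Rightarrow> ('e^2^2) set"
  assumes E_closed: "alg_closed TYPE('e)"
    and \<Gamma>_sub: "subgroup \<Gamma> PGL2"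
    and \<Gamma>_fin: "finite \<Gamma>"
    and \<Gamma>_irr: "proj_irreducible \<Gamma>"
    and \<Gamma>_type: "PGL2\<lparr>carrier := \<Gamma>\<rparr> \<cong> alt_group 4 \<or> PGL2\<lparr>carrier := \<Gamma>\<rparr> \<cong> sym_group 4
                  \<or> PGL2\<lparr>carrier := \<Gamma>\<rparr> \<cong> alt_group 5
                  \<or> (\<exists>n. odd n \<and> n \<ge> 3 \<and> PGL2\<lparr>carrier := \<Gamma>\<rparr> \<cong> dihedral_group n)"
    and X_W: "Xs \<subseteq> Wsp"
    and X_irr: "irred_rep mscale (PGL2\<lparr>carrier := \<Gamma>\<rparr>) psi Xs"
    and X_faithful: "\<forall>a\<in>\<Gamma>. (\<forall>M\<in>Xs. psi a M = M) \<longrightarrow> a = \<one>\<^bsub>PGL2\<^esub>"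
    and G_grp: "group G"
    and G_fin: "finite (carrier G)"
    and H_nrm: "H \<lhd> G"
    and \<pi>_hom: "\<pi> \<in> hom (G\<lparr>carrier := H\<rparr>) (PGL2\<lparr>carrier := \<Gamma>\<rparr>)"
    and \<pi>_surj: "\<pi> ` H = \<Gamma>"
  shows
    "(\<forall>U. U \<subseteq> ind_space G H (Nsub G H \<pi> \<Gamma> Xs) (\<lambda>h. psi (\<pi> h)) Xs
         \<and> irred_rep (fscale mscale) (G\<lparr>carrier := Nsub G H \<pi> \<Gamma> Xs\<rparr>)
              (ind_act G (Nsub G H \<pi> \<Gamma> Xs)) U
       \<longrightarrow> irred_rep (fscale (fscale mscale)) G (ind_act G (carrier G))
              (ind_space G (Nsub G H \<pi> \<Gamma> Xs) (carrier G) (ind_act G (Nsub G H \<pi> \<Gamma> Xs)) U))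
   \<and> (\<forall>V'. V' \<subseteq> ind_space G H (carrier G) (\<lambda>h. psi (\<pi> h)) Xs
         \<and> irred_rep (fscale mscale) G (ind_act G (carrier G)) V'
       \<longrightarrow> (\<exists>U. U \<subseteq> ind_space G H (Nsub G H \<pi> \<Gamma> Xs) (\<lambda>h. psi (\<pi> h)) Xs
             \<and> irred_rep (fscale mscale) (G\<lparr>carrier := Nsub G H \<pi> \<Gamma> Xs\<rparr>)
                  (ind_act G (Nsub G H \<pi> \<Gamma> Xs)) U
             \<and> rep_iso (fscale mscale) (fscale (fscale mscale)) G (ind_act G (carrier G)) V'
                  (ind_act G (carrier G))
                  (ind_space G (Nsub G H \<pi> \<Gamma> Xs) (carrier G) (ind_act G (Nsub G H \<pi> \<Gamma> Xs)) U)))"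
proof -
  interpret L: L47 G H \<Gamma> Xs \<pi>
    using G_grp \<Gamma>_sub X_irr X_faithful G_fin H_nrm \<pi>_hom \<pi>_surj
    by (simp add: L47_def L47_axioms_def)
  have NNe: "Nsub G H \<pi> \<Gamma> Xs = L.NN" by (simp add: L.NN_def)
  have Xe: "(\<lambda>h. psi (\<pi> h)) = L.Xr" by (rule L.Xr_eq)
  show ?thesis unfolding NNe Xe using L.part1 L.part2 by blast
qed

end
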